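(* Let $X$ be a $T_1$ space and $\mathcal C$ a pre-pseudogroup on $X$. Equip the morphism set $\mathrm{Mor}(\mathcal C^\star)=\coprod_{x,y\in X}\mathcal C_x^y\cong\coprod_{x\in X}\mathcal C_x(X)=E_{\mathcal C}$ with the topology of the étale space of the presheaf $\mathcal C(-,X)$ (generated by the sets $[f,U]=\{f_x: x\in U\}$ for open $U$ and $f\in\mathcal C(U,X)$), and equip the object set with the topology of $X$. Then $\mathcal C^\star$ is a topological étale groupoid over $X$: the source map $s(f_x)=x$ and the target map $t$ (with $t(\varphi)=y$ for $\varphi\in\mathcal C_x^y$) are local homeomorphisms, and the identity map $X\to E_{\mathcal C}$, the inversion $E_{\mathcal C}\to E_{\mathcal C}$ and the composition $E_{\mathcal C}\times_X E_{\mathcal C}\to E_{\mathcal C}$ are continuous.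
   Context: $X_{top}$ denotes the set of open subsets of $X$, regarded as a category with exactly one morphism $U\to V$ iff $U\subseteq V$. Let $\mathcal C$ be a small category with $\mathrm{Ob}(\mathcal C)=X_{top}$ containing $X_{top}$ as a subcategory (identity on objects). For each open $V$, $\mathcal C(-,V)$ is a presheaf of sets on $X$ (restriction along $U'\subseteq U$ = precomposition with the inclusion morphism). For $x\in X$ let $\mathcal C_x(V)=\operatorname{colim}_{U\ni x}\mathcal C(U,V)$ (germ of $f\in\mathcal C(U,V)$ at $x$ written $f_x$); postcomposition with inclusions makes this functorial in $V$, and for $y\in X$ let $\mathcal C_x^y=\lim_{V\ni y}\mathcal C_x(V)$ (limit over open neighbourhoods of $y$), with projections $\mathcal C_x^y\to\mathcal C_x(V)$. Composition in $\mathcal C$ induces $\mathcal C_y^z\times\mathcal C_x^y\to\mathcal C_x^z$: given $\varphi\in\mathcal C_x^y,\psi\in\mathcal C_y^z$ and open $W\ni z$, choose $g\in\mathcal C(V,W)$, $y\in V$, representing the component $\psi_W$, and $f\in\mathcal C(U,V)$ representing $\varphi_V$; the $W$-component of $\psi\circ\varphi$ is $(g\circ f)_x$. This defines a category $\mathcal C^\star$ with objects the points of $X$ and $\mathcal C^\star(x,y)=\mathcal C_x^y$. For $X$ a $T_1$ space, a pre-pseudogroup on $X$ is such a $\mathcal C$ satisfying: (1) $\mathrm{Ob}(\mathcal C)=\mathrm{Ob}(X_{top})$; (2) for every open $V$ and $x\in X$, the map $\coprod_{y\in V}\mathcal C_x^y\to\mathcal C_x(V)$ induced by the projections is a bijection;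 (3) $\mathcal C^\star$ is a groupoid. A topological groupoid over $X$ has object space $X$ and a topological morphism space with continuous structure maps; it is étale if source and target are local homeomorphisms. *)

theory Defs
  imports "HOL-Analysis.Analysis"
begin

text \<open>A small category C whose objects are the open sets of a topological space X.
  Morphisms are elements of type 'm in the set Mor; dm/cd give their source and
  target objects (open sets); cmp g f is the composite g o f; ident U the identity.
  incl U V is the inclusion morphism U -> V (for U subset V) of the subcategory X_top.\<close>

definition cat_on_opens ::
  "'a topology \<Rightarrow> 'm set \<Rightarrow> ('m \<Rightarrow> 'a set) \<Rightarrow> ('m \<Rightarrow> 'a set)
   \<Rightarrow> ('m \<Rightarrow> 'm \<Rightarrow> 'm) \<Rightarrow> ('a set \<Rightarrow> 'm) \<Rightarrow> bool" where
  "cat_on_opens X Mor dm cd cmp ident \<longleftrightarrow>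
     (\<forall>f\<in>Mor. openin X (dm f) \<and> openin X (cd f)) \<and>
     (\<forall>f\<in>Mor. \<forall>g\<in>Mor. cd f = dm g \<longrightarrow>
         cmp g f \<in> Mor \<and> dm (cmp g f) = dm f \<and> cd (cmp g f) = cd g) \<and>
     (\<forall>f\<in>Mor. \<forall>g\<in>Mor. \<forall>h\<in>Mor. cd f = dm g \<and> cd g = dm h \<longrightarrow>
         cmp h (cmp g f) = cmp (cmp h g) f) \<and>
     (\<forall>U. openin X U \<longrightarrow> ident U \<in> Mor \<and> dm (ident U) = U \<and> cd (ident U) = U) \<and>
     (\<forall>f\<in>Mor. cmp (ident (cd f)) f = f \<and> cmp f (ident (dm f)) = f)"

definition contains_Xtop ::
  "'a topology \<Rightarrow> 'm set \<Rightarrow> ('m \<Rightarrow> 'a set) \<Rightarrow> ('m \<Rightarrow> 'a set)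
   \<Rightarrow> ('m \<Rightarrow> 'm \<Rightarrow> 'm) \<Rightarrow> ('a set \<Rightarrow> 'm) \<Rightarrow> ('a set \<Rightarrow> 'a set \<Rightarrow> 'm) \<Rightarrow> bool" where
  "contains_Xtop X Mor dm cd cmp ident incl \<longleftrightarrow>
     (\<forall>U V. openin X U \<and> openin X V \<and> U \<subseteq> V \<longrightarrow>
         incl U V \<in> Mor \<and> dm (incl U V) = U \<and> cd (incl U V) = V) \<and>
     (\<forall>U. openin X U \<longrightarrow> incl U U = ident U) \<and>
     (\<forall>U V W. openin X U \<and> openin X V \<and> openin X W \<and> U \<subseteq> V \<and> V \<subseteq> W \<longrightarrow>
         cmp (incl V W) (incl U V) = incl U W)"

text \<open>Germ at x of a morphism f (with x in dm f) of the presheaf C(-, cd f):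
  the set of all morphisms g into cd f, with x in dm g, agreeing with f after
  restriction (precomposition with inclusions) to some open W with x in W.\<close>
definition germ ::
  "'a topology \<Rightarrow> 'm set \<Rightarrow> ('m \<Rightarrow> 'a set) \<Rightarrow> ('m \<Rightarrow> 'a set)
   \<Rightarrow> ('m \<Rightarrow> 'm \<Rightarrow> 'm) \<Rightarrow> ('a set \<Rightarrow> 'a set \<Rightarrow> 'm) \<Rightarrow> 'a \<Rightarrow> 'm \<Rightarrow> 'm set" where
  "germ X Mor dm cd cmp incl x f =
     {g \<in> Mor. cd g = cd f \<and> x \<in> dm g \<and>
        (\<exists>W. openin X W \<and> x \<in> W \<and> W \<subseteq> dm f \<inter> dm g \<and>
             cmp f (incl W (dm f)) = cmp g (incl W (dm g)))}"

text \<open>The stalk C_x(V) = colim_{U containing x} C(U,V).\<close>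
definition stalk ::
  "'a topology \<Rightarrow> 'm set \<Rightarrow> ('m \<Rightarrow> 'a set) \<Rightarrow> ('m \<Rightarrow> 'a set)
   \<Rightarrow> ('m \<Rightarrow> 'm \<Rightarrow> 'm) \<Rightarrow> ('a set \<Rightarrow> 'a set \<Rightarrow> 'm) \<Rightarrow> 'a \<Rightarrow> 'a set \<Rightarrow> 'm set set" where
  "stalk X Mor dm cd cmp incl x V =
     {germ X Mor dm cd cmp incl x f | f. f \<in> Mor \<and> cd f = V \<and> x \<in> dm f}"

definition push ::
  "'a topology \<Rightarrow> 'm set \<Rightarrow> ('m \<Rightarrow> 'a set) \<Rightarrow> ('m \<Rightarrow> 'a set)
   \<Rightarrow> ('m \<Rightarrow> 'm \<Rightarrow> 'm) \<Rightarrow> ('a set \<Rightarrow> 'a set \<Rightarrow> 'm) \<Rightarrow> 'a \<Rightarrow> 'a set \<Rightarrow> 'a set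
   \<Rightarrow> 'm set \<Rightarrow> 'm set" where
  "push X Mor dm cd cmp incl x V V' \<gamma> =
     (\<Union>f\<in>\<gamma>. germ X Mor dm cd cmp incl x (cmp (incl V V') f))"

text \<open>C_x^y = lim_{V containing y} C_x(V): compatible families, indexed by the open
  neighbourhoods V of y (value {} at other sets, for extensionality).\<close>
definition hom_star ::
  "'a topology \<Rightarrow> 'm set \<Rightarrow> ('m \<Rightarrow> 'a set) \<Rightarrow> ('m \<Rightarrow> 'a set)
   \<Rightarrow> ('m \<Rightarrow> 'm \<Rightarrow> 'm) \<Rightarrow> ('a set \<Rightarrow> 'a set \<Rightarrow> 'm) \<Rightarrow> 'a \<Rightarrow> 'a
   \<Rightarrow> ('a set \<Rightarrow> 'm set) set" where
  "hom_star X Mor dm cd cmp incl x y =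
     {\<phi>. (\<forall>V. openin X V \<and> y \<in> V \<longrightarrow> \<phi> V \<in> stalk X Mor dm cd cmp incl x V) \<and>
         (\<forall>V V'. openin X V \<and> openin X V' \<and> y \<in> V \<and> V \<subseteq> V' \<longrightarrow>
             push X Mor dm cd cmp incl x V V' (\<phi> V) = \<phi> V') \<and>
         (\<forall>V. \<not> (openin X V \<and> y \<in> V) \<longrightarrow> \<phi> V = {})}"

definition comp_star ::
  "'a topology \<Rightarrow> 'm set \<Rightarrow> ('m \<Rightarrow> 'a set) \<Rightarrow> ('m \<Rightarrow> 'a set)
   \<Rightarrow> ('m \<Rightarrow> 'm \<Rightarrow> 'm) \<Rightarrow> ('a set \<Rightarrow> 'a set \<Rightarrow> 'm) \<Rightarrow> 'a \<Rightarrow> 'a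
   \<Rightarrow> ('a set \<Rightarrow> 'm set) \<Rightarrow> ('a set \<Rightarrow> 'm set) \<Rightarrow> ('a set \<Rightarrow> 'm set)" where
  "comp_star X Mor dm cd cmp incl x z \<psi> \<phi> =
     (\<lambda>W. if openin X W \<and> z \<in> W
          then (\<Union>{germ X Mor dm cd cmp incl x (cmp g f) | g f. g \<in> \<psi> W \<and> f \<in> \<phi> (dm g)})
          else {})"

definition id_star ::
  "'a topology \<Rightarrow> 'm set \<Rightarrow> ('m \<Rightarrow> 'a set) \<Rightarrow> ('m \<Rightarrow> 'a set)
   \<Rightarrow> ('m \<Rightarrow> 'm \<Rightarrow> 'm) \<Rightarrow> ('a set \<Rightarrow> 'm) \<Rightarrow> ('a set \<Rightarrow> 'a set \<Rightarrow> 'm) \<Rightarrow> 'a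
   \<Rightarrow> ('a set \<Rightarrow> 'm set)" where
  "id_star X Mor dm cd cmp ident incl x =
     (\<lambda>W. if openin X W \<and> x \<in> W then germ X Mor dm cd cmp incl x (ident W) else {})"

definition pre_pseudogroup ::
  "'a topology \<Rightarrow> 'm set \<Rightarrow> ('m \<Rightarrow> 'a set) \<Rightarrow> ('m \<Rightarrow> 'a set)
   \<Rightarrow> ('m \<Rightarrow> 'm \<Rightarrow> 'm) \<Rightarrow> ('a set \<Rightarrow> 'm) \<Rightarrow> ('a set \<Rightarrow> 'a set \<Rightarrow> 'm) \<Rightarrow> bool" where
  "pre_pseudogroup X Mor dm cd cmp ident incl \<longleftrightarrow>
     cat_on_opens X Mor dm cd cmp ident \<and>
     contains_Xtop X Mor dm cd cmp ident incl \<and>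
     \<comment> \<open>(2) the projections induce a bijection  coprod_{y in V} C_x^y -> C_x(V)\<close>
     (\<forall>V x. openin X V \<and> x \<in> topspace X \<longrightarrow>
        bij_betw (\<lambda>(y, \<phi>). \<phi> V) (SIGMA y:V. hom_star X Mor dm cd cmp incl x y)
                 (stalk X Mor dm cd cmp incl x V)) \<and>
     \<comment> \<open>(3) C^star is a groupoid\<close>
     (\<forall>x\<in>topspace X. \<forall>y\<in>topspace X. \<forall>\<phi>\<in>hom_star X Mor dm cd cmp incl x y.
        \<exists>\<psi>\<in>hom_star X Mor dm cd cmp incl y x.
          comp_star X Mor dm cd cmp incl x x \<psi> \<phi> = id_star X Mor dm cd cmp ident incl x \<and>
          comp_star X Mor dm cd cmp incl y y \<phi> \<psi> = id_star X Mor dm cd cmp ident incl y)"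

definition mor_star ::
  "'a topology \<Rightarrow> 'm set \<Rightarrow> ('m \<Rightarrow> 'a set) \<Rightarrow> ('m \<Rightarrow> 'a set)
   \<Rightarrow> ('m \<Rightarrow> 'm \<Rightarrow> 'm) \<Rightarrow> ('a set \<Rightarrow> 'a set \<Rightarrow> 'm)
   \<Rightarrow> ('a \<times> 'a \<times> ('a set \<Rightarrow> 'm set)) set" where
  "mor_star X Mor dm cd cmp incl =
     {(x, y, \<phi>). x \<in> topspace X \<and> y \<in> topspace X \<and> \<phi> \<in> hom_star X Mor dm cd cmp incl x y}"

text \<open>Topology on Mor(C^star), transported from the etale space E_C of C(-,X)
  along (x,y,phi) |-> phi_X: generated by the sets [f,U] = {f_x : x in U},
  f in C(U,X), U open.\<close>
definition mor_top ::
  "'a topology \<Rightarrow> 'm set \<Rightarrow> ('m \<Rightarrow> 'a set) \<Rightarrow> ('m \<Rightarrow> 'a set)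
   \<Rightarrow> ('m \<Rightarrow> 'm \<Rightarrow> 'm) \<Rightarrow> ('a set \<Rightarrow> 'a set \<Rightarrow> 'm)
   \<Rightarrow> ('a \<times> 'a \<times> ('a set \<Rightarrow> 'm set)) topology" where
  "mor_top X Mor dm cd cmp incl =
     subtopology
       (topology_generated_by
          {{(x, y, \<phi>) \<in> mor_star X Mor dm cd cmp incl. x \<in> dm f \<and>
               \<phi> (topspace X) = germ X Mor dm cd cmp incl x f}
           | f. f \<in> Mor \<and> cd f = topspace X})
       (mor_star X Mor dm cd cmp incl)"

definition src_star :: "('a \<times> 'a \<times> 'b) \<Rightarrow> 'a" where
  "src_star p = fst p"

definition tgt_star :: "('a \<times> 'a \<times> 'b) \<Rightarrow> 'a" where
  "tgt_star p = fst (snd p)"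

definition inv_star ::
  "'a topology \<Rightarrow> 'm set \<Rightarrow> ('m \<Rightarrow> 'a set) \<Rightarrow> ('m \<Rightarrow> 'a set)
   \<Rightarrow> ('m \<Rightarrow> 'm \<Rightarrow> 'm) \<Rightarrow> ('a set \<Rightarrow> 'm) \<Rightarrow> ('a set \<Rightarrow> 'a set \<Rightarrow> 'm)
   \<Rightarrow> ('a \<times> 'a \<times> ('a set \<Rightarrow> 'm set)) \<Rightarrow> ('a \<times> 'a \<times> ('a set \<Rightarrow> 'm set))" where
  "inv_star X Mor dm cd cmp ident incl p =
     (case p of (x, y, \<phi>) \<Rightarrow>
        (y, x, THE \<psi>. \<psi> \<in> hom_star X Mor dm cd cmp incl y x \<and>
          comp_star X Mor dm cd cmp incl x x \<psi> \<phi> = id_star X Mor dm cd cmp ident incl x \<and>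
          comp_star X Mor dm cd cmp incl y y \<phi> \<psi> = id_star X Mor dm cd cmp ident incl y))"

definition compose_star ::
  "'a topology \<Rightarrow> 'm set \<Rightarrow> ('m \<Rightarrow> 'a set) \<Rightarrow> ('m \<Rightarrow> 'a set)
   \<Rightarrow> ('m \<Rightarrow> 'm \<Rightarrow> 'm) \<Rightarrow> ('a set \<Rightarrow> 'a set \<Rightarrow> 'm)
   \<Rightarrow> ('a \<times> 'a \<times> ('a set \<Rightarrow> 'm set)) \<times> ('a \<times> 'a \<times> ('a set \<Rightarrow> 'm set))
   \<Rightarrow> ('a \<times> 'a \<times> ('a set \<Rightarrow> 'm set))" where
  "compose_star X Mor dm cd cmp incl qp =
     (case qp of ((y, z, \<psi>), (x, y', \<phi>)) \<Rightarrow>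
        (x, z, comp_star X Mor dm cd cmp incl x z \<psi> \<phi>))"

definition local_homeomorphism_map :: "'a topology \<Rightarrow> 'b topology \<Rightarrow> ('a \<Rightarrow> 'b) \<Rightarrow> bool" where
  "local_homeomorphism_map S T f \<longleftrightarrow>
     f ` topspace S \<subseteq> topspace T \<and>
     (\<forall>p\<in>topspace S. \<exists>N. openin S N \<and> p \<in> N \<and> openin T (f ` N) \<and>
         homeomorphic_map (subtopology S N) (subtopology T (f ` N)) f)"

end

theory Submission
  imports Defs
begin

locale PP =
  fixes X :: "'a topology"
    and Mor :: "'m set" and dm cd :: "'m \<Rightarrow> 'a set"
    and cmp :: "'m \<Rightarrow> 'm \<Rightarrow> 'm" and ident :: "'a set \<Rightarrow> 'm"
    and incl :: "'a set \<Rightarrow> 'a set \<Rightarrow> 'm"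
  assumes pp: "pre_pseudogroup X Mor dm cd cmp ident incl"
begin

lemma catX: "cat_on_opens X Mor dm cd cmp ident"
  using pp unfolding pre_pseudogroup_def by blast
lemma XtopX: "contains_Xtop X Mor dm cd cmp ident incl"
  using pp unfolding pre_pseudogroup_def by blast

abbreviation "T \<equiv> topspace X"
abbreviation "G \<equiv> germ X Mor dm cd cmp incl"
abbreviation "H \<equiv> hom_star X Mor dm cd cmp incl"
abbreviation "CS \<equiv> comp_star X Mor dm cd cmp incl"
abbreviation "ID \<equiv> id_star X Mor dm cd cmp ident incl"
abbreviation "ST \<equiv> stalk X Mor dm cd cmp incl"
abbreviation "PU \<equiv> push X Mor dm cd cmp incl"

lemma C1: "\<forall>f\<in>Mor. openin X (dm f) \<and> openin X (cd f)"
  using catX unfolding cat_on_opens_def by (rule conjunct1)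
lemma C2: "\<forall>f\<in>Mor. \<forall>g\<in>Mor. cd f = dm g \<longrightarrow>
         cmp g f \<in> Mor \<and> dm (cmp g f) = dm f \<and> cd (cmp g f) = cd g"
  using catX unfolding cat_on_opens_def by (rule conjunct2[THEN conjunct1])
lemma C3: "\<forall>f\<in>Mor. \<forall>g\<in>Mor. \<forall>h\<in>Mor. cd f = dm g \<and> cd g = dm h \<longrightarrow>
         cmp h (cmp g f) = cmp (cmp h g) f"
  using catX unfolding cat_on_opens_def by (rule conjunct2[THEN conjunct2, THEN conjunct1])
lemma C4: "\<forall>U. openin X U \<longrightarrow> ident U \<in> Mor \<and> dm (ident U) = U \<and> cd (ident U) = U"
  using catX unfolding cat_on_opens_def by (rule conjunct2[THEN conjunct2, THEN conjunct2, THEN conjunct1])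
lemma C5: "\<forall>f\<in>Mor. cmp (ident (cd f)) f = f \<and> cmp f (ident (dm f)) = f"
  using catX unfolding cat_on_opens_def by (rule conjunct2[THEN conjunct2, THEN conjunct2, THEN conjunct2])
lemma X1: "\<forall>U V. openin X U \<and> openin X V \<and> U \<subseteq> V \<longrightarrow>
         incl U V \<in> Mor \<and> dm (incl U V) = U \<and> cd (incl U V) = V"
  using XtopX unfolding contains_Xtop_def by (rule conjunct1)
lemma X2: "\<forall>U. openin X U \<longrightarrow> incl U U = ident U"
  using XtopX unfolding contains_Xtop_def by (rule conjunct2[THEN conjunct1])
lemma X3: "\<forall>U V W. openin X U \<and> openin X V \<and> openin X W \<and> U \<subseteq> V \<and> V \<subseteq> W \<longrightarrow>
         cmp (incl V W) (incl U V) = incl U W"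
  using XtopX unfolding contains_Xtop_def by (rule conjunct2[THEN conjunct2])

lemma mor_open: "f \<in> Mor \<Longrightarrow> openin X (dm f)" "f \<in> Mor \<Longrightarrow> openin X (cd f)"
  using C1 by blast+

lemma cmp_Mor: "f \<in> Mor \<Longrightarrow> g \<in> Mor \<Longrightarrow> cd f = dm g \<Longrightarrow> cmp g f \<in> Mor"
  "f \<in> Mor \<Longrightarrow> g \<in> Mor \<Longrightarrow> cd f = dm g \<Longrightarrow> dm (cmp g f) = dm f"
  "f \<in> Mor \<Longrightarrow> g \<in> Mor \<Longrightarrow> cd f = dm g \<Longrightarrow> cd (cmp g f) = cd g"
  using C2 by blast+

lemma assoc: "f \<in> Mor \<Longrightarrow> g \<in> Mor \<Longrightarrow> h \<in> Mor \<Longrightarrow> cd f = dm g \<Longrightarrow> cd g = dm h \<Longrightarrow>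
   cmp h (cmp g f) = cmp (cmp h g) f"
  using C3 by blast

lemma ident: "openin X U \<Longrightarrow> ident U \<in> Mor" "openin X U \<Longrightarrow> dm (ident U) = U"
  "openin X U \<Longrightarrow> cd (ident U) = U"
  using C4 by blast+

lemma unit: "f \<in> Mor \<Longrightarrow> cmp (ident (cd f)) f = f" "f \<in> Mor \<Longrightarrow> cmp f (ident (dm f)) = f"
  using C5 by blast+

lemma incl: "openin X U \<Longrightarrow> openin X V \<Longrightarrow> U \<subseteq> V \<Longrightarrow> incl U V \<in> Mor"
  "openin X U \<Longrightarrow> openin X V \<Longrightarrow> U \<subseteq> V \<Longrightarrow> dm (incl U V) = U"
  "openin X U \<Longrightarrow> openin X V \<Longrightarrow> U \<subseteq> V \<Longrightarrow> cd (incl U V) = V"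
  using X1 by blast+

lemma incl_refl: "openin X U \<Longrightarrow> incl U U = ident U"
  using X2 by blast

lemma incl_comp: "openin X U \<Longrightarrow> openin X V \<Longrightarrow> openin X W \<Longrightarrow> U \<subseteq> V \<Longrightarrow> V \<subseteq> W \<Longrightarrow>
   cmp (incl V W) (incl U V) = incl U W"
  using X3 by blast

lemma bij2: "openin X V \<Longrightarrow> x \<in> T \<Longrightarrow>
   bij_betw (\<lambda>(y, \<phi>). \<phi> V) (SIGMA y:V. H x y) (ST x V)"
  using pp[unfolded pre_pseudogroup_def, THEN conjunct2, THEN conjunct2, THEN conjunct1] by blast

lemma grpd: "x \<in> T \<Longrightarrow> y \<in> T \<Longrightarrow> \<phi> \<in> H x y \<Longrightarrow>
   \<exists>\<psi>\<in>H y x. CS x x \<psi> \<phi> = ID x \<and> CS y y \<phi> \<psi> = ID y"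
  using pp[unfolded pre_pseudogroup_def, THEN conjunct2, THEN conjunct2, THEN conjunct2] by blast

lemma dm_T: "f \<in> Mor \<Longrightarrow> dm f \<subseteq> T" "f \<in> Mor \<Longrightarrow> cd f \<subseteq> T"
  using mor_open openin_subset by blast+

definition res where "res f W = cmp f (incl W (dm f))"

lemma res: assumes "f \<in> Mor" "openin X W" "W \<subseteq> dm f"
  shows "res f W \<in> Mor" "dm (res f W) = W" "cd (res f W) = cd f"
  using assms cmp_Mor[of "incl W (dm f)" f] incl[of W "dm f"] mor_open
  unfolding res_def by auto

lemma res_res: assumes "f \<in> Mor" "openin X W" "openin X W'" "W' \<subseteq> W" "W \<subseteq> dm f"
  shows "res (res f W) W' = res f W'"
proof -
  have d: "dm (res f W) = W" using res[OF assms(1,2,5)] by blast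
  have oD: "openin X (dm f)" using assms(1) mor_open by blast
  have i1: "incl W (dm f) \<in> Mor" "dm (incl W (dm f)) = W" "cd (incl W (dm f)) = dm f"
    using incl[OF assms(2) oD assms(5)] by auto
  have i2: "incl W' W \<in> Mor" "dm (incl W' W) = W'" "cd (incl W' W) = W"
    using incl[OF assms(3) assms(2) assms(4)] by auto
  have "res (res f W) W' = cmp (cmp f (incl W (dm f))) (incl W' W)"
    unfolding res_def[of "res f W"] d unfolding res_def ..
  also have "\<dots> = cmp f (cmp (incl W (dm f)) (incl W' W))"
    using assoc[of "incl W' W" "incl W (dm f)" f] i1 i2 assms(1) by simp
  also have "cmp (incl W (dm f)) (incl W' W) = incl W' (dm f)"
    using incl_comp[OF assms(3) assms(2) oD assms(4,5)] .
  finally show ?thesis unfolding res_def .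
qed

lemma res_full: "f \<in> Mor \<Longrightarrow> res f (dm f) = f"
  unfolding res_def using mor_open incl_refl unit by auto

lemma res_cmp: assumes "f \<in> Mor" "h \<in> Mor" "cd f = dm h" "openin X W" "W \<subseteq> dm f"
  shows "res (cmp h f) W = cmp h (res f W)"
proof -
  have oD: "openin X (dm f)" using assms(1) mor_open by blast
  have i1: "incl W (dm f) \<in> Mor" "dm (incl W (dm f)) = W" "cd (incl W (dm f)) = dm f"
    using incl[OF assms(4) oD assms(5)] by auto
  have "dm (cmp h f) = dm f" using cmp_Mor assms by blast
  then show ?thesis unfolding res_def
    using assoc[of "incl W (dm f)" f h] i1 assms by simp
qed

definition agr where "agr x f g \<longleftrightarrow>
  (\<exists>W. openin X W \<and> x \<in> W \<and> W \<subseteq> dm f \<inter> dm g \<and> res f W = res g W)"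

lemma germ_alt: "G x f = {g \<in> Mor. cd g = cd f \<and> x \<in> dm g \<and> agr x f g}"
  unfolding germ_def agr_def res_def by auto

lemma agr_refl: "f \<in> Mor \<Longrightarrow> x \<in> dm f \<Longrightarrow> agr x f f"
  unfolding agr_def using mor_open by auto

lemma agr_sym: "agr x f g \<Longrightarrow> agr x g f"
  unfolding agr_def by auto

lemma agr_trans: assumes "f \<in> Mor" "g \<in> Mor" "h \<in> Mor" "agr x f g" "agr x g h"
  shows "agr x f h"
proof -
  obtain W1 where W1: "openin X W1" "x \<in> W1" "W1 \<subseteq> dm f \<inter> dm g" "res f W1 = res g W1"
    using assms(4) unfolding agr_def by auto
  obtain W2 where W2: "openin X W2" "x \<in> W2" "W2 \<subseteq> dm g \<inter> dm h" "res g W2 = res h W2"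
    using assms(5) unfolding agr_def by auto
  define W where "W = W1 \<inter> W2"
  have oW: "openin X W" using W1 W2 W_def by auto
  have "res f W = res (res f W1) W" using res_res[of f W1 W] W1 oW W_def assms by auto
  also have "\<dots> = res (res g W1) W" using W1 by simp
  also have "\<dots> = res g W" using res_res[of g W1 W] W1 oW W_def assms by auto
  also have "\<dots> = res (res g W2) W" using res_res[of g W2 W] W2 oW W_def assms by auto
  also have "\<dots> = res (res h W2) W" using W2 by simp
  also have "\<dots> = res h W" using res_res[of h W2 W] W2 oW W_def assms by auto
  finally have e: "res f W = res h W" .
  have "x \<in> W" "W \<subseteq> dm f \<inter> dm h" using W1 W2 W_def by auto
  then show ?thesis unfolding agr_def using oW e by (intro exI[of _ W]) simp
qed

lemma agr_nbhd: assumes "agr x f g"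
  obtains A where "openin X A" "x \<in> A" "A \<subseteq> dm f \<inter> dm g" "\<forall>x'\<in>A. agr x' f g"
proof -
  obtain W where W: "openin X W" "x \<in> W" "W \<subseteq> dm f \<inter> dm g" "res f W = res g W"
    using assms unfolding agr_def by auto
  have "\<forall>x'\<in>W. agr x' f g" unfolding agr_def using W by auto
  then show ?thesis using W that by blast
qed

lemma germ_self: "f \<in> Mor \<Longrightarrow> x \<in> dm f \<Longrightarrow> f \<in> G x f"
  unfolding germ_alt using agr_refl by auto

lemma germ_eq: assumes "f \<in> Mor" "g \<in> Mor" "cd g = cd f" "x \<in> dm f" "x \<in> dm g"
  shows "G x f = G x g \<longleftrightarrow> agr x f g"
proof
  assume "G x f = G x g"
  then have "f \<in> G x g" using germ_self assms by auto
  then show "agr x f g" unfolding germ_alt by (auto intro: agr_sym)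
next
  assume a: "agr x f g"
  show "G x f = G x g" unfolding germ_alt using a assms
    by (auto intro: agr_sym agr_trans)
qed

lemma germ_mem: assumes "f \<in> Mor" "x \<in> dm f"
  shows "g \<in> G x f \<longleftrightarrow> (g \<in> Mor \<and> cd g = cd f \<and> x \<in> dm g \<and> G x g = G x f)"
  using germ_eq[of g f x] assms unfolding germ_alt by (auto intro: agr_sym)

lemma agr_res: assumes "f \<in> Mor" "openin X W" "W \<subseteq> dm f" "x \<in> W"
  shows "agr x f (res f W)"
  unfolding agr_def using assms res[OF assms(1-3)] res_res[OF assms(1,2,2) order_refl assms(3)]
  by (intro exI[of _ W]) auto

lemma germ_res: assumes "f \<in> Mor" "openin X W" "W \<subseteq> dm f" "x \<in> W"
  shows "G x (res f W) = G x f"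
  using germ_eq[of f "res f W" x] agr_res[OF assms] res[OF assms(1-3)] assms by auto

lemma agr_cmp: assumes "f1 \<in> Mor" "f2 \<in> Mor" "h \<in> Mor" "cd f1 = dm h" "cd f2 = dm h" "agr x f1 f2"
  shows "agr x (cmp h f1) (cmp h f2)"
proof -
  obtain W where W: "openin X W" "x \<in> W" "W \<subseteq> dm f1 \<inter> dm f2" "res f1 W = res f2 W"
    using assms(6) unfolding agr_def by auto
  then show ?thesis unfolding agr_def using res_cmp[of f1 h W] res_cmp[of f2 h W] assms cmp_Mor
    by (intro exI[of _ W]) auto
qed

lemma germ_cmp: assumes "f1 \<in> Mor" "f2 \<in> Mor" "h \<in> Mor" "cd f1 = dm h" "cd f2 = dm h"
   "x \<in> dm f1" "x \<in> dm f2" "G x f1 = G x f2"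
  shows "G x (cmp h f1) = G x (cmp h f2)"
  using assms germ_eq[of f1 f2 x] germ_eq[of "cmp h f1" "cmp h f2" x] agr_cmp[of f1 f2 h x] cmp_Mor
  by auto


lemma stalk_iff: "s \<in> ST x V \<longleftrightarrow> (\<exists>f. f \<in> Mor \<and> cd f = V \<and> x \<in> dm f \<and> s = G x f)"
  unfolding stalk_def mem_Collect_eq by (intro ex_cong1) auto

lemma push_germ: assumes "f \<in> Mor" "cd f = V" "openin X V'" "V \<subseteq> V'" "x \<in> dm f"
  shows "PU x V V' (G x f) = G x (cmp (incl V V') f)"
proof -
  have oV: "openin X V" using assms mor_open by blast
  have i: "incl V V' \<in> Mor" "dm (incl V V') = V" "cd (incl V V') = V'"
    using incl[OF oV assms(3,4)] by auto
  have eq: "G x (cmp (incl V V') f') = G x (cmp (incl V V') f)" if "f' \<in> G x f" for f'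
  proof -
    have "f' \<in> Mor" "cd f' = V" "x \<in> dm f'" "G x f' = G x f"
      using that germ_mem[OF assms(1,5)] assms(2) by auto
    then show ?thesis using germ_cmp[of f' f "incl V V'" x] i assms by auto
  qed
  have mem: "f \<in> G x f" using germ_self assms by blast
  show ?thesis unfolding push_def by (rule UN_constant_eq[OF mem]) (use eq in blast)
qed

lemma hom_iff: "\<phi> \<in> H x y \<longleftrightarrow>
  (\<forall>V. openin X V \<and> y \<in> V \<longrightarrow> \<phi> V \<in> ST x V) \<and>
  (\<forall>V V'. openin X V \<and> openin X V' \<and> y \<in> V \<and> V \<subseteq> V' \<longrightarrow> PU x V V' (\<phi> V) = \<phi> V') \<and>
  (\<forall>V. \<not> (openin X V \<and> y \<in> V) \<longrightarrow> \<phi> V = {})"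
  unfolding hom_star_def mem_Collect_eq ..
lemma homD1: "\<phi> \<in> H x y \<Longrightarrow> openin X V \<Longrightarrow> y \<in> V \<Longrightarrow> \<phi> V \<in> ST x V"
  unfolding hom_iff by (elim conjE allE impE) auto
lemma homD2: "\<phi> \<in> H x y \<Longrightarrow> openin X V \<Longrightarrow> openin X V' \<Longrightarrow> y \<in> V \<Longrightarrow> V \<subseteq> V' \<Longrightarrow>
   PU x V V' (\<phi> V) = \<phi> V'"
  unfolding hom_iff by (elim conjE) (drule spec[of _ V], drule spec[of _ V'], simp)
lemma homD3: "\<phi> \<in> H x y \<Longrightarrow> \<not> (openin X V \<and> y \<in> V) \<Longrightarrow> \<phi> V = {}"
  unfolding hom_iff by (elim conjE) (drule spec[of _ V], simp)
lemma homI: "(\<And>V. openin X V \<Longrightarrow> y \<in> V \<Longrightarrow> \<phi> V \<in> ST x V) \<Longrightarrow>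
  (\<And>V V'. openin X V \<Longrightarrow> openin X V' \<Longrightarrow> y \<in> V \<Longrightarrow> V \<subseteq> V' \<Longrightarrow> PU x V V' (\<phi> V) = \<phi> V') \<Longrightarrow>
  (\<And>V. \<not> (openin X V \<and> y \<in> V) \<Longrightarrow> \<phi> V = {}) \<Longrightarrow> \<phi> \<in> H x y"
  unfolding hom_iff by blast

lemma hom_rep: assumes "\<phi> \<in> H x y" "openin X V" "y \<in> V"
  obtains f where "f \<in> Mor" "cd f = V" "x \<in> dm f" "\<phi> V = G x f"
  using homD1[OF assms] unfolding stalk_iff by blast

lemma hom_mem: assumes "\<phi> \<in> H x y" "openin X V" "y \<in> V" "f \<in> \<phi> V"
  shows "f \<in> Mor" "cd f = V" "x \<in> dm f" "\<phi> V = G x f"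
proof -
  obtain f0 where f0: "f0 \<in> Mor" "cd f0 = V" "x \<in> dm f0" "\<phi> V = G x f0"
    using hom_rep[OF assms(1-3)] by blast
  then show "f \<in> Mor" "cd f = V" "x \<in> dm f" "\<phi> V = G x f"
    using germ_mem[OF f0(1,3), of f] assms(4) by auto
qed

lemma hom_ex_mem: assumes "\<phi> \<in> H x y" "openin X V" "y \<in> V"
  obtains f where "f \<in> \<phi> V"
proof -
  obtain f0 where f0: "f0 \<in> Mor" "cd f0 = V" "x \<in> dm f0" "\<phi> V = G x f0"
    using hom_rep[OF assms(1-3)] by blast
  then show ?thesis using germ_self[OF f0(1,3)] that by auto
qed

lemma hom_push: assumes "\<phi> \<in> H x y" "y \<in> V" "V \<subseteq> V'" "openin X V'" "f \<in> Mor" "cd f = V"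
  "x \<in> dm f" "\<phi> V = G x f"
  shows "\<phi> V' = G x (cmp (incl V V') f)"
proof -
  have oV: "openin X V" using assms mor_open by blast
  have "\<phi> V' = PU x V V' (\<phi> V)" using homD2[OF assms(1) oV assms(4,2,3)] by simp
  also have "\<dots> = G x (cmp (incl V V') f)" using assms push_germ by simp
  finally show ?thesis .
qed

lemma hom_uniq: assumes "x \<in> T" "openin X V" "y \<in> V" "y' \<in> V" "\<phi> \<in> H x y" "\<phi>' \<in> H x y'"
  "\<phi> V = \<phi>' V"
  shows "y = y' \<and> \<phi> = \<phi>'"
proof -
  have "inj_on (\<lambda>(y, \<phi>). \<phi> V) (SIGMA y:V. H x y)"
    using bij2[OF assms(2,1)] unfolding bij_betw_def by blast
  then show ?thesis using assms unfolding inj_on_def by blast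
qed

lemma hom_exists: assumes "f \<in> Mor" "x \<in> dm f"
  obtains y \<phi> where "y \<in> cd f" "\<phi> \<in> H x y" "\<phi> (cd f) = G x f"
proof -
  have xT: "x \<in> T" using dm_T(1)[OF assms(1)] assms(2) by blast
  have im: "(\<lambda>(y, \<phi>). \<phi> (cd f)) ` (SIGMA y:cd f. H x y) = ST x (cd f)"
    using bij2[OF mor_open(2)[OF assms(1)] xT] unfolding bij_betw_def by (rule conjunct2)
  have "G x f \<in> ST x (cd f)" unfolding stalk_iff using assms by blast
  then have "G x f \<in> (\<lambda>(y, \<phi>). \<phi> (cd f)) ` (SIGMA y:cd f. H x y)" unfolding im .
  then obtain p where p: "p \<in> (SIGMA y:cd f. H x y)" "G x f = (\<lambda>(y, \<phi>). \<phi> (cd f)) p"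
    by (rule imageE)
  obtain y \<phi> where "p = (y, \<phi>)" by (cases p)
  then show ?thesis using p that[of y \<phi>] by simp
qed

lemma hom_T: assumes "\<phi> \<in> H x y" "y \<in> T" shows "x \<in> T"
proof -
  obtain f where "f \<in> Mor" "x \<in> dm f" by (rule hom_rep[OF assms(1) openin_topspace assms(2)])
  then show ?thesis using dm_T(1) by blast
qed

lemma repr: assumes "f \<in> Mor" "x \<in> dm f" "openin X V" "cd f \<subseteq> V" "\<phi> \<in> H x y" "y \<in> V"
  "\<phi> V = G x (cmp (incl (cd f) V) f)"
  shows "y \<in> cd f \<and> \<phi> (cd f) = G x f"
proof -
  obtain y' \<phi>' where a: "y' \<in> cd f" "\<phi>' \<in> H x y'" "\<phi>' (cd f) = G x f"
    using hom_exists[OF assms(1,2)] by blast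
  have "\<phi>' V = G x (cmp (incl (cd f) V) f)"
    using hom_push[OF a(2) a(1) assms(4,3,1) refl assms(2) a(3)] .
  moreover have xT: "x \<in> T" using dm_T assms(1,2) by blast
  moreover have "y' \<in> V" using a(1) assms(4) by blast
  ultimately have "y' = y \<and> \<phi>' = \<phi>" using hom_uniq[OF xT assms(3) _ assms(6) a(2) assms(5)] assms(7) by blast
  then show ?thesis using a by auto
qed

lemma evcont: assumes "f \<in> Mor" "x \<in> dm f" "\<phi> \<in> H x y" "y \<in> cd f" "\<phi> (cd f) = G x f"
  "openin X R" "y \<in> R"
  shows "\<exists>A. openin X A \<and> x \<in> A \<and> A \<subseteq> dm f \<and>
     (\<forall>x'\<in>A. \<forall>y' \<phi>'. \<phi>' \<in> H x' y' \<and> y' \<in> cd f \<and> \<phi>' (cd f) = G x' f \<longrightarrow> y' \<in> R)"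
proof -
  define R' where "R' = R \<inter> cd f"
  have oC: "openin X (cd f)" using assms(1) by (rule mor_open)
  have oR': "openin X R'" unfolding R'_def using assms(6) oC by (rule openin_Int)
  have yR': "y \<in> R'" "R' \<subseteq> cd f" unfolding R'_def using assms(4,7) by auto
  obtain j where j: "j \<in> Mor" "cd j = R'" "x \<in> dm j" "\<phi> R' = G x j"
    by (rule hom_rep[OF assms(3) oR' yR'(1)])
  define ij where "ij = cmp (incl R' (cd f)) j"
  have i: "incl R' (cd f) \<in> Mor" "dm (incl R' (cd f)) = R'" "cd (incl R' (cd f)) = cd f"
    using incl[OF oR' oC yR'(2)] by auto
  have ij: "ij \<in> Mor" "dm ij = dm j" "cd ij = cd f"
    unfolding ij_def using cmp_Mor[OF j(1) i(1)] i(2) j(2) i(3) by auto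
  have "\<phi> (cd f) = G x ij" unfolding ij_def
    by (rule hom_push[OF assms(3) yR' oC j(1,2,3,4)])
  then have "G x f = G x ij" using assms(5) by simp
  then have "agr x f ij" using germ_eq[OF assms(1) ij(1) ij(3) assms(2)] j(3) ij(2) by simp
  then obtain A where A: "openin X A" "x \<in> A" "A \<subseteq> dm f \<inter> dm ij" "\<forall>x'\<in>A. agr x' f ij"
    by (rule agr_nbhd)
  have "y' \<in> R" if th: "x' \<in> A" "\<phi>' \<in> H x' y'" "y' \<in> cd f" "\<phi>' (cd f) = G x' f" for x' y' \<phi>'
  proof -
    have x': "x' \<in> dm f" "x' \<in> dm j" using A(3) th(1) ij(2) by auto
    have ag: "agr x' f ij" using A(4) th(1) by blast
    have g: "G x' f = G x' ij" using germ_eq[OF assms(1) ij(1) ij(3) x'(1)] x'(2) ij(2) ag by simp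
    obtain y'' \<phi>'' where a: "y'' \<in> cd j" "\<phi>'' \<in> H x' y''" "\<phi>'' (cd j) = G x' j"
      by (rule hom_exists[OF j(1) x'(2)])
    have y''R: "y'' \<in> R'" using a(1) j(2) by simp
    have "\<phi>'' (cd f) = G x' ij" unfolding ij_def
      using hom_push[OF a(2) y''R yR'(2) oC j(1,2) x'(2)] a(3) j(2) by simp
    then have eqp: "\<phi>'' (cd f) = \<phi>' (cd f)" using g th(4) by simp
    have x'T: "x' \<in> T" using dm_T(1)[OF assms(1)] x'(1) by blast
    have "y'' = y' \<and> \<phi>'' = \<phi>'"
      by (rule hom_uniq[OF x'T oC _ th(3) a(2) th(2) eqp]) (use y''R yR'(2) in blast)
    then show ?thesis using y''R R'_def by simp
  qed
  then show ?thesis using A by (intro exI[of _ A]) auto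
qed

lemma comp_aux: assumes "\<phi> \<in> H x y" "g \<in> Mor" "y \<in> dm g" "f \<in> Mor" "cd f = dm g" "x \<in> dm f"
  "\<phi> (dm g) = G x f" "openin X U" "y \<in> U" "U \<subseteq> dm g" "k \<in> Mor" "cd k = U" "x \<in> dm k"
  "\<phi> U = G x k"
  shows "G x (cmp g f) = G x (cmp (res g U) k)"
proof -
  have oD: "openin X (dm g)" using assms mor_open by blast
  have i: "incl U (dm g) \<in> Mor" "dm (incl U (dm g)) = U" "cd (incl U (dm g)) = dm g"
    using incl[OF assms(8) oD assms(10)] by auto
  define k1 where "k1 = cmp (incl U (dm g)) k"
  have k1: "k1 \<in> Mor" "cd k1 = dm g" "dm k1 = dm k" using cmp_Mor[of k "incl U (dm g)"] i assms k1_def by auto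
  have "\<phi> (dm g) = G x k1" unfolding k1_def using hom_push[OF assms(1,9,10) oD assms(11,12,13,14)] .
  then have "G x f = G x k1" using assms by simp
  then have "G x (cmp g f) = G x (cmp g k1)" using germ_cmp[of f k1 g x] k1 assms by auto
  also have "cmp g k1 = cmp (res g U) k" unfolding k1_def res_def
    using assoc[of k "incl U (dm g)" g] i assms by simp
  finally show ?thesis .
qed

lemma comp_key: assumes "\<phi> \<in> H x y" "\<psi> \<in> H y z" "openin X W" "z \<in> W"
  "g \<in> \<psi> W" "f \<in> \<phi> (dm g)" "g' \<in> \<psi> W" "f' \<in> \<phi> (dm g')"
  shows "G x (cmp g f) = G x (cmp g' f')"
proof -
  have g: "g \<in> Mor" "cd g = W" "y \<in> dm g" "\<psi> W = G y g" using hom_mem[OF assms(2,3,4,5)] by auto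
  have g': "g' \<in> Mor" "cd g' = W" "y \<in> dm g'" "\<psi> W = G y g'" using hom_mem[OF assms(2,3,4,7)] by auto
  have f: "f \<in> Mor" "cd f = dm g" "x \<in> dm f" "\<phi> (dm g) = G x f"
    using hom_mem[OF assms(1) mor_open(1)[OF g(1)] g(3) assms(6)] by auto
  have f': "f' \<in> Mor" "cd f' = dm g'" "x \<in> dm f'" "\<phi> (dm g') = G x f'"
    using hom_mem[OF assms(1) mor_open(1)[OF g'(1)] g'(3) assms(8)] by auto
  have "agr y g g'" using germ_eq[of g g' y] g g' by auto
  then obtain U where U: "openin X U" "y \<in> U" "U \<subseteq> dm g \<inter> dm g'" "res g U = res g' U"
    unfolding agr_def by blast
  obtain k where k: "k \<in> Mor" "cd k = U" "x \<in> dm k" "\<phi> U = G x k"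
    using hom_rep[OF assms(1) U(1,2)] by blast
  have "G x (cmp g f) = G x (cmp (res g U) k)"
    using comp_aux[OF assms(1) g(1,3) f U(1,2) _ k] U by auto
  also have "\<dots> = G x (cmp (res g' U) k)" using U by simp
  also have "\<dots> = G x (cmp g' f')"
    using comp_aux[OF assms(1) g'(1,3) f' U(1,2) _ k] U by auto
  finally show ?thesis .
qed

lemma COMP: assumes "\<phi> \<in> H x y" "\<psi> \<in> H y z" "openin X W" "z \<in> W"
  "g \<in> \<psi> W" "f \<in> \<phi> (dm g)"
  shows "CS x z \<psi> \<phi> W = G x (cmp g f)"
proof -
  have "CS x z \<psi> \<phi> W = \<Union>{G x (cmp g' f') | g' f'. g' \<in> \<psi> W \<and> f' \<in> \<phi> (dm g')}"
    unfolding comp_star_def using assms(3,4) by simp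
  also have "\<dots> = G x (cmp g f)"
    using comp_key[OF assms(1-6)] assms(5,6) by blast
  finally show ?thesis .
qed

lemma CS_out: "\<not> (openin X W \<and> z \<in> W) \<Longrightarrow> CS x z \<psi> \<phi> W = {}"
  unfolding comp_star_def by (simp only: if_not_P if_False)

lemma ID_out: "\<not> (openin X W \<and> x \<in> W) \<Longrightarrow> ID x W = {}"
  unfolding id_star_def by (simp only: if_not_P if_False)

lemma comp_hom: assumes "\<phi> \<in> H x y" "\<psi> \<in> H y z"
  shows "CS x z \<psi> \<phi> \<in> H x z"
proof (rule homI)
  fix W assume W: "openin X W" "z \<in> W"
  obtain g where g0: "g \<in> \<psi> W" using hom_ex_mem[OF assms(2) W] by blast
  have g: "g \<in> Mor" "cd g = W" "y \<in> dm g" "\<psi> W = G y g" using hom_mem[OF assms(2) W g0] by auto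
  obtain f where f0: "f \<in> \<phi> (dm g)" using hom_ex_mem[OF assms(1) mor_open(1)[OF g(1)] g(3)] by blast
  have f: "f \<in> Mor" "cd f = dm g" "x \<in> dm f" using hom_mem[OF assms(1) mor_open(1)[OF g(1)] g(3) f0] by auto
  show "CS x z \<psi> \<phi> W \<in> ST x W" unfolding COMP[OF assms W g0 f0] stalk_iff
    using cmp_Mor[of f g] f g by auto
next
  fix W W' assume W: "openin X W" "openin X W'" "z \<in> W" "W \<subseteq> W'"
  obtain g where g0: "g \<in> \<psi> W" using hom_ex_mem[OF assms(2) W(1,3)] by blast
  have g: "g \<in> Mor" "cd g = W" "y \<in> dm g" "\<psi> W = G y g" using hom_mem[OF assms(2) W(1,3) g0] by auto
  obtain f where f0: "f \<in> \<phi> (dm g)" using hom_ex_mem[OF assms(1) mor_open(1)[OF g(1)] g(3)] by blast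
  have f: "f \<in> Mor" "cd f = dm g" "x \<in> dm f" using hom_mem[OF assms(1) mor_open(1)[OF g(1)] g(3) f0] by auto
  have i: "incl W W' \<in> Mor" "dm (incl W W') = W" "cd (incl W W') = W'" using incl[OF W(1,2,4)] by auto
  define g2 where "g2 = cmp (incl W W') g"
  have g2: "g2 \<in> Mor" "dm g2 = dm g" "cd g2 = W'" using cmp_Mor[of g "incl W W'"] i g g2_def by auto
  have "\<psi> W' = G y g2" unfolding g2_def using hom_push[OF assms(2) W(3,4,2) g(1,2,3,4)] .
  then have g20: "g2 \<in> \<psi> W'" using germ_self[OF g2(1)] g2 g by auto
  have f2: "f \<in> \<phi> (dm g2)" using f0 g2 by simp
  have "PU x W W' (CS x z \<psi> \<phi> W) = PU x W W' (G x (cmp g f))" using COMP[OF assms W(1,3) g0 f0] by simp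
  also have "\<dots> = G x (cmp (incl W W') (cmp g f))"
    using push_germ[of "cmp g f" W W' x] cmp_Mor[of f g] f g W by auto
  also have "cmp (incl W W') (cmp g f) = cmp g2 f" unfolding g2_def
    using assoc[of f g "incl W W'"] f g i by simp
  also have "G x (cmp g2 f) = CS x z \<psi> \<phi> W'" using COMP[OF assms W(2) _ g20 f2] W by auto
  finally show "PU x W W' (CS x z \<psi> \<phi> W) = CS x z \<psi> \<phi> W'" .
next
  fix W assume "\<not> (openin X W \<and> z \<in> W)"
  then show "CS x z \<psi> \<phi> W = {}" by (rule CS_out)
qed

lemma ID_at: "openin X W \<Longrightarrow> x \<in> W \<Longrightarrow> ID x W = G x (ident W)"
  unfolding id_star_def by simp

lemma id_hom: assumes "x \<in> T" shows "ID x \<in> H x x"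
proof (rule homI)
  fix W assume W: "openin X W" "x \<in> W"
  show "ID x W \<in> ST x W" unfolding ID_at[OF W] stalk_iff using ident[OF W(1)] W by auto
next
  fix W W' assume W: "openin X W" "openin X W'" "x \<in> W" "W \<subseteq> W'"
  have i: "incl W W' \<in> Mor" "dm (incl W W') = W" "cd (incl W W') = W'" using incl[OF W(1,2,4)] by auto
  have "PU x W W' (ID x W) = G x (cmp (incl W W') (ident W))"
    unfolding ID_at[OF W(1,3)] using push_germ[of "ident W" W W' x] ident[OF W(1)] W by auto
  also have "cmp (incl W W') (ident W) = incl W W'" using unit(2)[OF i(1)] i by simp
  also have "G x (incl W W') = G x (ident W')"
  proof -
    have "res (incl W W') W = incl W W'"
      unfolding res_def i(2) incl_refl[OF W(1)] using unit(2)[OF i(1)] i by simp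
    moreover have "res (ident W') W = incl W W'"
      unfolding res_def ident[OF W(2)] using unit(1)[OF i(1)] i by simp
    ultimately have "agr x (incl W W') (ident W')" unfolding agr_def
      using W i ident[OF W(2)] by (intro exI[of _ W]) auto
    then show ?thesis using germ_eq[of "incl W W'" "ident W'" x] i ident[OF W(2)] W by auto
  qed
  finally show "PU x W W' (ID x W) = ID x W'" using ID_at[OF W(2)] W by auto
next
  fix W assume "\<not> (openin X W \<and> x \<in> W)"
  then show "ID x W = {}" by (rule ID_out)
qed

lemma comp_id_r: assumes "\<psi> \<in> H y z" "y \<in> T" shows "CS y z \<psi> (ID y) = \<psi>"
proof
  fix W show "CS y z \<psi> (ID y) W = \<psi> W"
  proof (cases "openin X W \<and> z \<in> W")
    case True
    obtain g where g0: "g \<in> \<psi> W" using hom_ex_mem[OF assms(1)] True by blast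
    have g: "g \<in> Mor" "cd g = W" "y \<in> dm g" "\<psi> W = G y g" using hom_mem[OF assms(1) _ _ g0] True by auto
    have oD: "openin X (dm g)" using mor_open g by auto
    have "ident (dm g) \<in> ID y (dm g)" unfolding ID_at[OF oD g(3)]
      using germ_self ident[OF oD] g by auto
    then have "CS y z \<psi> (ID y) W = G y (cmp g (ident (dm g)))"
      using COMP[OF id_hom[OF assms(2)] assms(1) _ _ g0] True by auto
    then show ?thesis using unit(2)[OF g(1)] g by simp
  next
    case False
    then show ?thesis using homD3[OF assms(1) False] CS_out[OF False] by simp
  qed
qed

lemma comp_id_l: assumes "\<phi> \<in> H x y" "y \<in> T" shows "CS x y (ID y) \<phi> = \<phi>"
proof
  fix W show "CS x y (ID y) \<phi> W = \<phi> W"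
  proof (cases "openin X W \<and> y \<in> W")
    case True
    have i0: "ident W \<in> ID y W" unfolding ID_at[OF True[THEN conjunct1] True[THEN conjunct2]]
      using germ_self ident True by auto
    obtain f where f0: "f \<in> \<phi> W" using hom_ex_mem[OF assms(1)] True by blast
    have f: "f \<in> Mor" "cd f = W" "x \<in> dm f" "\<phi> W = G x f" using hom_mem[OF assms(1) _ _ f0] True by auto
    have f0': "f \<in> \<phi> (dm (ident W))" using f0 ident True by simp
    have "CS x y (ID y) \<phi> W = G x (cmp (ident W) f)"
      using COMP[OF assms(1) id_hom[OF assms(2)] _ _ i0 f0'] True by auto
    then show ?thesis using unit(1)[OF f(1)] f by simp
  next
    case False
    then show ?thesis using homD3[OF assms(1) False] CS_out[OF False] by simp
  qed
qed

lemma comp_assoc: assumes "\<phi> \<in> H x y" "\<psi> \<in> H y z" "\<xi> \<in> H z w"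
  shows "CS x w \<xi> (CS x z \<psi> \<phi>) = CS x w (CS y w \<xi> \<psi>) \<phi>"
proof
  fix W show "CS x w \<xi> (CS x z \<psi> \<phi>) W = CS x w (CS y w \<xi> \<psi>) \<phi> W"
  proof (cases "openin X W \<and> w \<in> W")
    case True
    obtain h where h0: "h \<in> \<xi> W" using hom_ex_mem[OF assms(3)] True by blast
    have h: "h \<in> Mor" "cd h = W" "z \<in> dm h" using hom_mem[OF assms(3) _ _ h0] True by auto
    have oh: "openin X (dm h)" using mor_open h by auto
    obtain g where g0: "g \<in> \<psi> (dm h)" using hom_ex_mem[OF assms(2) oh h(3)] by blast
    have g: "g \<in> Mor" "cd g = dm h" "y \<in> dm g" using hom_mem[OF assms(2) oh h(3) g0] by auto
    have og: "openin X (dm g)" using mor_open g by auto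
    obtain f where f0: "f \<in> \<phi> (dm g)" using hom_ex_mem[OF assms(1) og g(3)] by blast
    have f: "f \<in> Mor" "cd f = dm g" "x \<in> dm f" using hom_mem[OF assms(1) og g(3) f0] by auto
    have hg: "cmp h g \<in> Mor" "dm (cmp h g) = dm g" "cd (cmp h g) = W" using cmp_Mor[of g h] g h by auto
    have gf: "cmp g f \<in> Mor" "dm (cmp g f) = dm f" "cd (cmp g f) = dm h" using cmp_Mor[of f g] g f by auto
    have e1: "CS y w \<xi> \<psi> W = G y (cmp h g)" using COMP[OF assms(2,3) _ _ h0 g0] True by auto
    then have hg0: "cmp h g \<in> CS y w \<xi> \<psi> W" using germ_self hg g by auto
    have e2: "CS x z \<psi> \<phi> (dm h) = G x (cmp g f)" using COMP[OF assms(1,2) oh h(3) g0 f0] .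
    then have gf0: "cmp g f \<in> CS x z \<psi> \<phi> (dm h)" using germ_self gf f by auto
    have "CS x w \<xi> (CS x z \<psi> \<phi>) W = G x (cmp h (cmp g f))"
      using COMP[OF comp_hom[OF assms(1,2)] assms(3) _ _ h0 gf0] True by auto
    also have "\<dots> = G x (cmp (cmp h g) f)" using assoc[of f g h] f g h by simp
    also have "\<dots> = CS x w (CS y w \<xi> \<psi>) \<phi> W"
      using COMP[OF assms(1) comp_hom[OF assms(2,3)] _ _ hg0] True f0 hg by auto
    finally show ?thesis .
  next
    case False
    then show ?thesis using CS_out[OF False] by simp
  qed
qed

lemma inv_uniq: assumes "\<phi> \<in> H x y" "x \<in> T" "y \<in> T" "\<psi>1 \<in> H y x" "\<psi>2 \<in> H y x"
  "CS x x \<psi>1 \<phi> = ID x" "CS y y \<phi> \<psi>1 = ID y"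
  "CS x x \<psi>2 \<phi> = ID x" "CS y y \<phi> \<psi>2 = ID y"
  shows "\<psi>1 = \<psi>2"
proof -
  have "\<psi>1 = CS y x \<psi>1 (ID y)" using comp_id_r[OF assms(4,3)] by simp
  also have "\<dots> = CS y x \<psi>1 (CS y y \<phi> \<psi>2)" using assms by simp
  also have "\<dots> = CS y x (CS x x \<psi>1 \<phi>) \<psi>2" using comp_assoc[OF assms(5,1,4)] .
  also have "\<dots> = CS y x (ID x) \<psi>2" using assms by simp
  also have "\<dots> = \<psi>2" using comp_id_l[OF assms(5,2)] .
  finally show ?thesis .
qed


lemma invnb: assumes xT: "x \<in> T" and yT: "y \<in> T" and ph: "\<phi> \<in> H x y" and ps: "\<psi> \<in> H y x"
  and i1: "CS x x \<psi> \<phi> = ID x" and i2: "CS y y \<phi> \<psi> = ID y"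
  and g: "g \<in> Mor" "cd g = T" "y \<in> dm g" "\<psi> T = G y g"
  shows "\<exists>h. h \<in> Mor \<and> cd h = T \<and> x \<in> dm h \<and> \<phi> T = G x h \<and>
    (\<forall>x' y' \<phi>' \<psi>'. x' \<in> dm h \<and> \<phi>' \<in> H x' y' \<and> y' \<in> T \<and> \<phi>' T = G x' h \<and> \<psi>' \<in> H y' x' \<and>
        CS x' x' \<psi>' \<phi>' = ID x' \<and> CS y' y' \<phi>' \<psi>' = ID y' \<longrightarrow> y' \<in> dm g \<and> \<psi>' T = G y' g)"
proof -
  have oT: "openin X T" by simp
  have og: "openin X (dm g)" using g(1) by (rule mor_open)
  have gT: "dm g \<subseteq> T" using g(1) by (rule dm_T)
  have iT: "ident T \<in> Mor" "dm (ident T) = T" "cd (ident T) = T" using ident[OF oT] by auto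
  have g0: "g \<in> \<psi> T" using germ_self[OF g(1,3)] g(4) by simp
  obtain f1 where f10: "f1 \<in> \<phi> (dm g)" by (rule hom_ex_mem[OF ph og g(3)])
  have f1: "f1 \<in> Mor" "cd f1 = dm g" "x \<in> dm f1" "\<phi> (dm g) = G x f1"
    using hom_mem[OF ph og g(3) f10] by auto
  have of1: "openin X (dm f1)" using f1(1) by (rule mor_open)
  have gf: "cmp g f1 \<in> Mor" "dm (cmp g f1) = dm f1" "cd (cmp g f1) = T"
    using cmp_Mor[OF f1(1) g(1) f1(2)] g(2) by auto
  have "G x (cmp g f1) = G x (ident T)"
    using COMP[OF ph ps oT xT g0 f10] i1 ID_at[OF oT xT] by simp
  then have "agr x (cmp g f1) (ident T)"
    using germ_eq[OF gf(1) iT(1)] iT gf f1(3) xT by simp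
  then obtain A1 where A1: "openin X A1" "x \<in> A1" "A1 \<subseteq> dm (cmp g f1) \<inter> dm (ident T)"
    "\<forall>x'\<in>A1. agr x' (cmp g f1) (ident T)" by (rule agr_nbhd)
  have ik: "incl (dm g) T \<in> Mor" "dm (incl (dm g) T) = dm g" "cd (incl (dm g) T) = T"
    using incl[OF og oT gT] by auto
  define k where "k = cmp (incl (dm g) T) f1"
  have k: "k \<in> Mor" "dm k = dm f1" "cd k = T" unfolding k_def
    using cmp_Mor[OF f1(1) ik(1)] ik f1(2) by auto
  have phT: "\<phi> T = G x k" unfolding k_def using hom_push[OF ph g(3) gT oT f1] .
  have k0: "k \<in> \<phi> T" using germ_self[OF k(1)] k(2) f1(3) phT by simp
  obtain m0 where m00: "m0 \<in> \<psi> (dm f1)" by (rule hom_ex_mem[OF ps of1 f1(3)])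
  have m0: "m0 \<in> Mor" "cd m0 = dm f1" "y \<in> dm m0" "\<psi> (dm f1) = G y m0"
    using hom_mem[OF ps of1 f1(3) m00] by auto
  have km: "cmp k m0 \<in> Mor" "dm (cmp k m0) = dm m0" "cd (cmp k m0) = T"
    using cmp_Mor[OF m0(1) k(1)] m0(2) k by auto
  have "G y (cmp k m0) = G y (ident T)"
    using COMP[OF ps ph oT yT k0] m00 k(2) i2 ID_at[OF oT yT] by simp
  then have "agr y (cmp k m0) (ident T)"
    using germ_eq[OF km(1) iT(1)] iT km m0(3) yT by simp
  then obtain R1 where R1: "openin X R1" "y \<in> R1" "R1 \<subseteq> dm (cmp k m0) \<inter> dm (ident T)"
    "\<forall>y'\<in>R1. agr y' (cmp k m0) (ident T)" by (rule agr_nbhd)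
  have f1T: "dm f1 \<subseteq> T" using f1(1) by (rule dm_T)
  have im: "incl (dm f1) T \<in> Mor" "dm (incl (dm f1) T) = dm f1" "cd (incl (dm f1) T) = T"
    using incl[OF of1 oT f1T] by auto
  define m1 where "m1 = cmp (incl (dm f1) T) m0"
  have m1: "m1 \<in> Mor" "dm m1 = dm m0" "cd m1 = T" unfolding m1_def
    using cmp_Mor[OF m0(1) im(1)] m0(2) im by auto
  have "\<psi> T = G y m1" unfolding m1_def using hom_push[OF ps f1(3) f1T oT m0] .
  then have "G y m1 = G y g" using g(4) by simp
  then have "agr y m1 g" using germ_eq[OF m1(1) g(1)] g m1 m0(3) by simp
  then obtain R2 where R2: "openin X R2" "y \<in> R2" "R2 \<subseteq> dm m1 \<inter> dm g"
    "\<forall>y'\<in>R2. agr y' m1 g" by (rule agr_nbhd)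
  define R where "R = R1 \<inter> R2"
  have oR: "openin X R" "y \<in> R" unfolding R_def using R1 R2 by auto
  have "\<exists>A. openin X A \<and> x \<in> A \<and> A \<subseteq> dm f1 \<and>
     (\<forall>x'\<in>A. \<forall>y' \<phi>'. \<phi>' \<in> H x' y' \<and> y' \<in> cd f1 \<and> \<phi>' (cd f1) = G x' f1 \<longrightarrow> y' \<in> R)"
    by (rule evcont[OF f1(1,3) ph]) (use f1 g oR in auto)
  then obtain A2 where A2: "openin X A2" "x \<in> A2" "A2 \<subseteq> dm f1"
    "\<forall>x'\<in>A2. \<forall>y' \<phi>'. \<phi>' \<in> H x' y' \<and> y' \<in> cd f1 \<and> \<phi>' (cd f1) = G x' f1 \<longrightarrow> y' \<in> R"
    by blast
  define A where "A = A1 \<inter> A2"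
  have oA: "openin X A" "x \<in> A" "A \<subseteq> dm k" unfolding A_def using A1 A2 k(2) by auto
  define h where "h = res k A"
  have h: "h \<in> Mor" "dm h = A" "cd h = T" unfolding h_def using res[OF k(1) oA(1) oA(3)] k by auto
  have hx: "\<phi> T = G x h" unfolding h_def using germ_res[OF k(1) oA(1,3,2)] phT by simp
  have main: "y' \<in> dm g \<and> \<psi>' T = G y' g"
    if th: "x' \<in> dm h" "\<phi>' \<in> H x' y'" "y' \<in> T" "\<phi>' T = G x' h" "\<psi>' \<in> H y' x'"
      "CS x' x' \<psi>' \<phi>' = ID x'" "CS y' y' \<phi>' \<psi>' = ID y'" for x' y' \<phi>' \<psi>'
  proof -
    have x'A: "x' \<in> A" using th(1) h(2) by simp
    have x'f1: "x' \<in> dm f1" using x'A oA(3) k(2) by auto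
    have x'T: "x' \<in> T" using x'f1 f1T by auto
    have phT': "\<phi>' T = G x' k" using th(4) unfolding h_def using germ_res[OF k(1) oA(1,3) x'A] by simp
    have rp: "y' \<in> cd f1 \<and> \<phi>' (cd f1) = G x' f1"
      by (rule repr[OF f1(1) x'f1 oT _ th(2) th(3)]) (use f1(2) gT phT' k_def in auto)
    have y'g: "y' \<in> dm g" using rp f1(2) by simp
    have y'R: "y' \<in> R" using A2(4) x'A A_def th(2) rp by blast
    have y'm0: "y' \<in> dm m0" using y'R R_def R1(3) km(2) by auto
    obtain w \<psi>'' where w: "w \<in> cd m0" "\<psi>'' \<in> H y' w" "\<psi>'' (cd m0) = G y' m0"
      by (rule hom_exists[OF m0(1) y'm0])
    have wT: "w \<in> T" using w(1) m0(2) f1T by auto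
    have "\<psi>'' T = G y' m1" unfolding m1_def
      using hom_push[OF w(2) w(1) _ oT m0(1) refl y'm0 w(3)] m0(2) f1T by simp
    also have "\<dots> = G y' g" using R2(4) y'R R_def germ_eq[OF m1(1) g(1)] g m1 y'g y'm0 by auto
    finally have ps''T: "\<psi>'' T = G y' g" .
    have g0': "g \<in> \<psi>'' T" using ps''T germ_self[OF g(1) y'g] by simp
    have f10': "f1 \<in> \<phi>' (dm g)" using rp f1(2) germ_self[OF f1(1) x'f1] by simp
    have "CS x' w \<psi>'' \<phi>' T = G x' (cmp g f1)" by (rule COMP[OF th(2) w(2) oT wT g0' f10'])
    also have "\<dots> = G x' (ident T)"
      using A1(4) x'A A_def germ_eq[OF gf(1) iT(1)] iT gf x'f1 x'T by auto
    also have "\<dots> = ID x' T" using ID_at[OF oT x'T] by simp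
    finally have c1: "CS x' w \<psi>'' \<phi>' T = ID x' T" .
    have "w = x' \<and> CS x' w \<psi>'' \<phi>' = ID x'"
      by (rule hom_uniq[OF x'T oT wT x'T comp_hom[OF th(2) w(2)] id_hom[OF x'T] c1])
    then have wx: "w = x'" and c1': "CS x' x' \<psi>'' \<phi>' = ID x'" by auto
    have ps'': "\<psi>'' \<in> H y' x'" using w(2) wx by simp
    have k0': "k \<in> \<phi>' T" using phT' germ_self[OF k(1)] x'f1 k(2) by simp
    have m0': "m0 \<in> \<psi>'' (dm k)" using w(3) m0(2) k(2) germ_self[OF m0(1) y'm0] by simp
    have "CS y' y' \<phi>' \<psi>'' T = G y' (cmp k m0)" by (rule COMP[OF ps'' th(2) oT th(3) k0' m0'])
    also have "\<dots> = G y' (ident T)"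
      using R1(4) y'R R_def germ_eq[OF km(1) iT(1)] iT km y'm0 th(3) by auto
    also have "\<dots> = ID y' T" using ID_at[OF oT th(3)] by simp
    finally have c2: "CS y' y' \<phi>' \<psi>'' T = ID y' T" .
    have "y' = y' \<and> CS y' y' \<phi>' \<psi>'' = ID y'"
      by (rule hom_uniq[OF th(3) oT th(3) th(3) comp_hom[OF ps'' th(2)] id_hom[OF th(3)] c2])
    then have c2': "CS y' y' \<phi>' \<psi>'' = ID y'" by simp
    have "\<psi>' = \<psi>''" by (rule inv_uniq[OF th(2) x'T th(3) th(5) ps'' th(6,7) c1' c2'])
    then show ?thesis using y'g ps''T by simp
  qed
  show ?thesis using h oA(2) hx main by (intro exI[of _ h]) (auto simp del: )
qed


abbreviation "MSt \<equiv> mor_star X Mor dm cd cmp incl"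
abbreviation "MTp \<equiv> mor_top X Mor dm cd cmp incl"

definition Bs where "Bs f = {(x, y, \<phi>) \<in> MSt. x \<in> dm f \<and> \<phi> (topspace X) = G x f}"
definition Gens where "Gens = {Bs f | f. f \<in> Mor \<and> cd f = T}"

lemma MT_eq: "MTp = subtopology (topology_generated_by Gens) MSt"
  unfolding mor_top_def Bs_def Gens_def by (rule refl)

lemma mem_MS: "(x, y, \<phi>) \<in> MSt \<longleftrightarrow> x \<in> T \<and> y \<in> T \<and> \<phi> \<in> H x y"
  unfolding mor_star_def by simp

lemma mem_Bs: "(x, y, \<phi>) \<in> Bs f \<longleftrightarrow> (x, y, \<phi>) \<in> MSt \<and> x \<in> dm f \<and> \<phi> T = G x f"
  unfolding Bs_def by simp

lemma Bs_sub: "Bs f \<subseteq> MSt"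
  unfolding Bs_def by auto

lemma rep_p: assumes "p \<in> MSt" obtains f where "f \<in> Mor" "cd f = T" "p \<in> Bs f"
proof -
  obtain x y \<phi> where p: "p = (x, y, \<phi>)" by (cases p) auto
  have a: "x \<in> T" "y \<in> T" "\<phi> \<in> H x y" using assms p mem_MS by auto
  obtain f where f: "f \<in> Mor" "cd f = T" "x \<in> dm f" "\<phi> T = G x f"
    by (rule hom_rep[OF a(3) openin_topspace a(2)])
  have "p \<in> Bs f" unfolding p mem_Bs using assms p f by simp
  then show ?thesis using that f by blast
qed

lemma Bs_res: assumes "f \<in> Mor" "openin X W" "W \<subseteq> dm f"
  shows "Bs (res f W) = Bs f \<inter> {q. fst q \<in> W}"
proof (rule set_eqI)
  fix p :: "'a \<times> 'a \<times> ('a set \<Rightarrow> 'm set)"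
  obtain x y \<phi> where p: "p = (x, y, \<phi>)" by (cases p) auto
  have r: "dm (res f W) = W" using res[OF assms] by simp
  show "p \<in> Bs (res f W) \<longleftrightarrow> p \<in> Bs f \<inter> {q. fst q \<in> W}"
  proof (cases "x \<in> W")
    case True
    then have "G x (res f W) = G x f" using germ_res[OF assms True] by simp
    then show ?thesis using True assms(3) by (auto simp: p mem_Bs r)
  next
    case False
    then show ?thesis by (auto simp: p mem_Bs r)
  qed
qed

lemma basis: assumes "generate_topology_on Gens Oo"
  shows "p \<in> Oo \<Longrightarrow> p \<in> MSt \<Longrightarrow> \<exists>f. f \<in> Mor \<and> cd f = T \<and> p \<in> Bs f \<and> Bs f \<subseteq> Oo"
  using assms
proof (induction arbitrary: p)
  case Empty
  then show ?case by simp
next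
  case (Int a b)
  obtain f1 where f1: "f1 \<in> Mor" "cd f1 = T" "p \<in> Bs f1" "Bs f1 \<subseteq> a" using Int by blast
  obtain f2 where f2: "f2 \<in> Mor" "cd f2 = T" "p \<in> Bs f2" "Bs f2 \<subseteq> b" using Int by blast
  obtain x y \<phi> where p: "p = (x, y, \<phi>)" by (cases p) auto
  have x1: "x \<in> dm f1" "\<phi> T = G x f1" using f1(3) unfolding p mem_Bs by auto
  have x2: "x \<in> dm f2" "\<phi> T = G x f2" using f2(3) unfolding p mem_Bs by auto
  have e: "G x f1 = G x f2" using x1(2) x2(2) by simp
  have c: "cd f2 = cd f1" using f1(2) f2(2) by simp
  have "agr x f1 f2" using iffD1[OF germ_eq[OF f1(1) f2(1) c x1(1) x2(1)] e] .
  then obtain A where A: "openin X A" "x \<in> A" "A \<subseteq> dm f1 \<inter> dm f2" "\<forall>x'\<in>A. agr x' f1 f2"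
    by (rule agr_nbhd)
  have Af1: "A \<subseteq> dm f1" using A(3) by auto
  define h where "h = res f1 A"
  have h: "h \<in> Mor" "cd h = T" using res[OF f1(1) A(1) Af1] f1(2) h_def by auto
  have Bh: "Bs h = Bs f1 \<inter> {q. fst q \<in> A}" unfolding h_def by (rule Bs_res[OF f1(1) A(1) Af1])
  have "Bs h \<subseteq> Bs f2"
  proof
    fix q assume q: "q \<in> Bs h"
    obtain x' y' \<phi>' where qq: "q = (x', y', \<phi>')" by (cases q) auto
    have q1: "q \<in> Bs f1" "fst q \<in> A" using q Bh by auto
    have a: "(x', y', \<phi>') \<in> MSt" "x' \<in> dm f1" "\<phi>' T = G x' f1" "x' \<in> A"
      using q1 unfolding qq mem_Bs by auto
    have x'2: "x' \<in> dm f2" using a(4) A(3) by auto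
    have "G x' f1 = G x' f2" using germ_eq[OF f1(1) f2(1)] f1(2) f2(2) a(2) x'2 A(4) a(4) by simp
    then show "q \<in> Bs f2" unfolding qq mem_Bs using a x'2 by simp
  qed
  moreover have "p \<in> Bs h" unfolding Bh using f1(3) p A(2) by simp
  ultimately show ?case using h Bh f1(4) f2(4) by (intro exI[of _ h]) auto
next
  case (UN K)
  then obtain k where "k \<in> K" "p \<in> k" by blast
  then show ?case using UN.IH[of k p] UN.prems by blast
next
  case (Basis s)
  then obtain f where "f \<in> Mor" "cd f = T" "s = Bs f" unfolding Gens_def by blast
  then show ?case using Basis by blast
qed

lemma open_char: "openin MTp Oo \<longleftrightarrow> Oo \<subseteq> MSt \<and> (\<forall>p\<in>Oo. \<exists>f. f \<in> Mor \<and> cd f = T \<and> p \<in> Bs f \<and> Bs f \<subseteq> Oo)"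
proof
  assume "openin MTp Oo"
  then obtain S where S: "openin (topology_generated_by Gens) S" "Oo = S \<inter> MSt"
    unfolding MT_eq openin_subtopology by blast
  have g: "generate_topology_on Gens S" using S(1) by (rule openin_topology_generated_by)
  have "\<exists>f. f \<in> Mor \<and> cd f = T \<and> p \<in> Bs f \<and> Bs f \<subseteq> Oo" if "p \<in> Oo" for p
  proof -
    have pp: "p \<in> S" "p \<in> MSt" using that S(2) by auto
    obtain f where "f \<in> Mor" "cd f = T" "p \<in> Bs f" "Bs f \<subseteq> S"
      using basis[OF g pp] by blast
    then show ?thesis using Bs_sub[of f] S(2) by blast
  qed
  then show "Oo \<subseteq> MSt \<and> (\<forall>p\<in>Oo. \<exists>f. f \<in> Mor \<and> cd f = T \<and> p \<in> Bs f \<and> Bs f \<subseteq> Oo)"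
    using S(2) by blast
next
  assume a: "Oo \<subseteq> MSt \<and> (\<forall>p\<in>Oo. \<exists>f. f \<in> Mor \<and> cd f = T \<and> p \<in> Bs f \<and> Bs f \<subseteq> Oo)"
  define K where "K = {Bs f | f. f \<in> Mor \<and> cd f = T \<and> Bs f \<subseteq> Oo}"
  have "\<Union>K = Oo" unfolding K_def using a by blast
  moreover have "generate_topology_on Gens (\<Union>K)"
    by (rule generate_topology_on.UN) (auto simp: K_def Gens_def intro: generate_topology_on.Basis)
  ultimately have "openin (topology_generated_by Gens) Oo"
    by (simp add: openin_topology_generated_by_iff)
  then show "openin MTp Oo" unfolding MT_eq openin_subtopology using a by blast
qed

lemma topspace_MT: "topspace MTp = MSt"
proof -
  have "MSt \<subseteq> \<Union>Gens"
  proof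
    fix p assume "p \<in> MSt"
    then obtain f where "f \<in> Mor" "cd f = T" "p \<in> Bs f" by (rule rep_p)
    then show "p \<in> \<Union>Gens" unfolding Gens_def by blast
  qed
  then show ?thesis unfolding MT_eq by auto
qed

lemma Bs_open: "f \<in> Mor \<Longrightarrow> cd f = T \<Longrightarrow> openin MTp (Bs f)"
  unfolding open_char using Bs_sub by blast

lemma cont_into: assumes "\<And>p. p \<in> topspace S \<Longrightarrow> F p \<in> MSt"
  and "\<And>p f. p \<in> topspace S \<Longrightarrow> f \<in> Mor \<Longrightarrow> cd f = T \<Longrightarrow> F p \<in> Bs f \<Longrightarrow>
     \<exists>N. openin S N \<and> p \<in> N \<and> (\<forall>q\<in>N. F q \<in> Bs f)"
  shows "continuous_map S MTp F"
  unfolding continuous_map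
proof (intro conjI allI impI)
  show "F ` topspace S \<subseteq> topspace MTp" using assms(1) topspace_MT by auto
next
  fix U assume U: "openin MTp U"
  show "openin S {x \<in> topspace S. F x \<in> U}"
  proof (subst openin_subopen, intro ballI)
    fix p assume p: "p \<in> {x \<in> topspace S. F x \<in> U}"
    then obtain f where f: "f \<in> Mor" "cd f = T" "F p \<in> Bs f" "Bs f \<subseteq> U"
      using U unfolding open_char by blast
    obtain N where N: "openin S N" "p \<in> N" "\<forall>q\<in>N. F q \<in> Bs f" using assms(2)[of p f] p f by blast
    have "N \<subseteq> {x \<in> topspace S. F x \<in> U}" using N f(4) openin_subset[OF N(1)] by blast
    then show "\<exists>T. openin S T \<and> p \<in> T \<and> T \<subseteq> {x \<in> topspace S. F x \<in> U}" using N by blast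
  qed
qed

lemma src_cont: "continuous_map MTp X src_star"
  unfolding continuous_map
proof (intro conjI allI impI)
  show "src_star ` topspace MTp \<subseteq> T" unfolding topspace_MT src_star_def mor_star_def by auto
next
  fix U assume U: "openin X U"
  show "openin MTp {p \<in> topspace MTp. src_star p \<in> U}"
    unfolding open_char topspace_MT
  proof (intro conjI ballI)
    fix p assume p: "p \<in> {p \<in> MSt. src_star p \<in> U}"
    then obtain f where f: "f \<in> Mor" "cd f = T" "p \<in> Bs f" using rep_p by blast
    define W where "W = U \<inter> dm f"
    have W: "openin X W" "W \<subseteq> dm f" unfolding W_def using U mor_open(1)[OF f(1)] by auto
    have Bh: "Bs (res f W) = Bs f \<inter> {q. fst q \<in> W}" by (rule Bs_res[OF f(1) W])
    have "p \<in> Bs (res f W)" unfolding Bh using p f(3) W_def Bs_sub[of f] unfolding src_star_def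
      by (cases p) (auto simp: mem_Bs)
    moreover have "Bs (res f W) \<subseteq> {p \<in> MSt. src_star p \<in> U}"
      using Bh W_def Bs_sub[of f] unfolding src_star_def by auto
    moreover have "res f W \<in> Mor" "cd (res f W) = T" using res[OF f(1) W] f(2) by auto
    ultimately show "\<exists>f. f \<in> Mor \<and> cd f = T \<and> p \<in> Bs f \<and> Bs f \<subseteq> {p \<in> MSt. src_star p \<in> U}"
      by blast
  qed auto
qed

lemma src_img: assumes "f \<in> Mor" "cd f = T" shows "src_star ` Bs f = dm f"
proof
  show "src_star ` Bs f \<subseteq> dm f" unfolding src_star_def Bs_def by auto
next
  show "dm f \<subseteq> src_star ` Bs f"
  proof
    fix x assume x: "x \<in> dm f"
    obtain y \<phi> where a: "y \<in> cd f" "\<phi> \<in> H x y" "\<phi> (cd f) = G x f" by (rule hom_exists[OF assms(1) x])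
    have "x \<in> T" using x dm_T(1)[OF assms(1)] by blast
    then have "(x, y, \<phi>) \<in> Bs f" unfolding mem_Bs mem_MS using a assms x by simp
    then show "x \<in> src_star ` Bs f" unfolding src_star_def by force
  qed
qed

lemma src_open_img: assumes "openin MTp U" shows "openin X (src_star ` U)"
proof (subst openin_subopen, intro ballI)
  fix x assume "x \<in> src_star ` U"
  then obtain p where p: "p \<in> U" "x = src_star p" by blast
  then obtain f where f: "f \<in> Mor" "cd f = T" "p \<in> Bs f" "Bs f \<subseteq> U"
    using assms unfolding open_char by blast
  have "dm f \<subseteq> src_star ` U" using src_img[OF f(1,2)] f(4) by blast
  moreover have "x \<in> dm f" using src_img[OF f(1,2)] f(3) p(2) by blast
  ultimately show "\<exists>T. openin X T \<and> x \<in> T \<and> T \<subseteq> src_star ` U" using mor_open(1)[OF f(1)] by blast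
qed

lemma src_inj: assumes "f \<in> Mor" "cd f = T" shows "inj_on src_star (Bs f)"
proof (rule inj_onI)
  fix p q assume pq: "p \<in> Bs f" "q \<in> Bs f" "src_star p = src_star q"
  obtain x y \<phi> where p: "p = (x, y, \<phi>)" by (cases p) auto
  obtain x' y' \<phi>' where q: "q = (x', y', \<phi>')" by (cases q) auto
  have a: "x \<in> T" "y \<in> T" "\<phi> \<in> H x y" "\<phi> T = G x f" using pq(1) unfolding p mem_Bs mem_MS by auto
  have b: "x' = x" "y' \<in> T" "\<phi>' \<in> H x y'" "\<phi>' T = G x f"
    using pq(2,3) unfolding p q mem_Bs mem_MS src_star_def by auto
  have "y = y' \<and> \<phi> = \<phi>'" by (rule hom_uniq[OF a(1) openin_topspace a(2) b(2) a(3) b(3)]) (use a b in simp)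
  then show "p = q" using p q b by simp
qed

lemma src_homeo: assumes "f \<in> Mor" "cd f = T"
  shows "homeomorphic_map (subtopology MTp (Bs f)) (subtopology X (dm f)) src_star"
proof (rule bijective_open_imp_homeomorphic_map)
  have tB: "topspace (subtopology MTp (Bs f)) = Bs f" using Bs_sub topspace_MT by auto
  have tD: "topspace (subtopology X (dm f)) = dm f" using dm_T(1)[OF assms(1)] by auto
  have oB: "openin MTp (Bs f)" by (rule Bs_open[OF assms])
  have oD: "openin X (dm f)" by (rule mor_open(1)[OF assms(1)])
  show "continuous_map (subtopology MTp (Bs f)) (subtopology X (dm f)) src_star"
    unfolding continuous_map_in_subtopology
    using continuous_map_from_subtopology[OF src_cont] src_img[OF assms] tB by auto
  show "open_map (subtopology MTp (Bs f)) (subtopology X (dm f)) src_star"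
    unfolding open_map_def
  proof (intro allI impI)
    fix U assume "openin (subtopology MTp (Bs f)) U"
    then have U: "openin MTp U" "U \<subseteq> Bs f" using openin_open_subtopology[OF oB] by auto
    show "openin (subtopology X (dm f)) (src_star ` U)"
      unfolding openin_open_subtopology[OF oD]
      using src_open_img[OF U(1)] U(2) src_img[OF assms] by blast
  qed
  show "src_star ` topspace (subtopology MTp (Bs f)) = topspace (subtopology X (dm f))"
    unfolding tB tD by (rule src_img[OF assms])
  show "inj_on src_star (topspace (subtopology MTp (Bs f)))" unfolding tB by (rule src_inj[OF assms])
qed

lemma src_lh: "local_homeomorphism_map MTp X src_star"
  unfolding local_homeomorphism_map_def
proof (intro conjI ballI)
  show "src_star ` topspace MTp \<subseteq> T" using src_cont continuous_map_image_subset_topspace by blast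
next
  fix p assume "p \<in> topspace MTp"
  then have "p \<in> MSt" using topspace_MT by simp
  then obtain f where f: "f \<in> Mor" "cd f = T" "p \<in> Bs f" by (rule rep_p)
  show "\<exists>N. openin MTp N \<and> p \<in> N \<and> openin X (src_star ` N) \<and>
         homeomorphic_map (subtopology MTp N) (subtopology X (src_star ` N)) src_star"
    using Bs_open[OF f(1,2)] f(3) src_img[OF f(1,2)] mor_open(1)[OF f(1)] src_homeo[OF f(1,2)]
    by (intro exI[of _ "Bs f"]) simp
qed


abbreviation "iv \<equiv> inv_star X Mor dm cd cmp ident incl"

lemma inv_ex: assumes "(x, y, \<phi>) \<in> MSt"
  shows "\<exists>\<psi>. iv (x, y, \<phi>) = (y, x, \<psi>) \<and> \<psi> \<in> H y x \<and> CS x x \<psi> \<phi> = ID x \<and> CS y y \<phi> \<psi> = ID y"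
proof -
  have a: "x \<in> T" "y \<in> T" "\<phi> \<in> H x y" using assms mem_MS by auto
  obtain \<psi>0 where p0: "\<psi>0 \<in> H y x" "CS x x \<psi>0 \<phi> = ID x" "CS y y \<phi> \<psi>0 = ID y"
    using grpd[OF a] by blast
  have "(THE \<psi>. \<psi> \<in> H y x \<and> CS x x \<psi> \<phi> = ID x \<and> CS y y \<phi> \<psi> = ID y) = \<psi>0"
  proof (rule the_equality)
    show "\<psi>0 \<in> H y x \<and> CS x x \<psi>0 \<phi> = ID x \<and> CS y y \<phi> \<psi>0 = ID y" using p0 by simp
  next
    fix \<psi> assume "\<psi> \<in> H y x \<and> CS x x \<psi> \<phi> = ID x \<and> CS y y \<phi> \<psi> = ID y"
    then show "\<psi> = \<psi>0" using inv_uniq[OF a(3,1,2) _ p0(1) _ _ p0(2,3)] by blast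
  qed
  then have "iv (x, y, \<phi>) = (y, x, \<psi>0)" unfolding inv_star_def by simp
  then show ?thesis using p0 by blast
qed

lemma inv_MS: assumes "p \<in> MSt" shows "iv p \<in> MSt"
proof -
  obtain x y \<phi> where p: "p = (x, y, \<phi>)" by (cases p) auto
  obtain \<psi> where e: "iv p = (y, x, \<psi>)" "\<psi> \<in> H y x" using inv_ex assms p by blast
  show ?thesis unfolding e mem_MS using e assms p mem_MS by auto
qed

lemma inv_inv: assumes "p \<in> MSt" shows "iv (iv p) = p"
proof -
  obtain x y \<phi> where p: "p = (x, y, \<phi>)" by (cases p) auto
  have a: "x \<in> T" "y \<in> T" "\<phi> \<in> H x y" using assms p mem_MS by auto
  obtain \<psi> where e: "iv p = (y, x, \<psi>)" "\<psi> \<in> H y x" "CS x x \<psi> \<phi> = ID x" "CS y y \<phi> \<psi> = ID y"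
    using inv_ex assms p by blast
  have m: "(y, x, \<psi>) \<in> MSt" using mem_MS a e by auto
  obtain \<phi>' where e': "iv (y, x, \<psi>) = (x, y, \<phi>')" "\<phi>' \<in> H x y" "CS y y \<phi>' \<psi> = ID y"
    "CS x x \<psi> \<phi>' = ID x"
    using inv_ex[OF m] by blast
  have "\<phi>' = \<phi>" by (rule inv_uniq[OF e(2) a(2,1) e'(2) a(3) e'(3,4) e(4,3)])
  then show ?thesis using e e' p by simp
qed

lemma tgt_inv: assumes "p \<in> MSt" shows "tgt_star p = src_star (iv p)"
proof -
  obtain x y \<phi> where p: "p = (x, y, \<phi>)" by (cases p) auto
  obtain \<psi> where e: "iv p = (y, x, \<psi>)" using inv_ex assms p by blast
  show ?thesis using e unfolding tgt_star_def src_star_def p by simp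
qed

lemma inv_cont: "continuous_map MTp MTp iv"
proof (rule cont_into)
  fix p assume "p \<in> topspace MTp"
  then show "iv p \<in> MSt" using inv_MS topspace_MT by simp
next
  fix p f assume p: "p \<in> topspace MTp" and f: "f \<in> Mor" "cd f = T" "iv p \<in> Bs f"
  obtain x y \<phi> where pp: "p = (x, y, \<phi>)" by (cases p) auto
  have pm: "(x, y, \<phi>) \<in> MSt" using p pp topspace_MT by simp
  have a: "x \<in> T" "y \<in> T" "\<phi> \<in> H x y" using pm mem_MS by auto
  obtain \<psi> where e: "iv p = (y, x, \<psi>)" "\<psi> \<in> H y x" "CS x x \<psi> \<phi> = ID x" "CS y y \<phi> \<psi> = ID y"
    using inv_ex pm pp by blast
  have b: "y \<in> dm f" "\<psi> T = G y f" using f(3) unfolding e mem_Bs by auto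
  obtain h where h: "h \<in> Mor" "cd h = T" "x \<in> dm h" "\<phi> T = G x h"
    "\<forall>x' y' \<phi>' \<psi>'. x' \<in> dm h \<and> \<phi>' \<in> H x' y' \<and> y' \<in> T \<and> \<phi>' T = G x' h \<and> \<psi>' \<in> H y' x' \<and>
        CS x' x' \<psi>' \<phi>' = ID x' \<and> CS y' y' \<phi>' \<psi>' = ID y' \<longrightarrow> y' \<in> dm f \<and> \<psi>' T = G y' f"
    using invnb[OF a e(2,3,4) f(1,2) b] by blast
  have "\<forall>q\<in>Bs h. iv q \<in> Bs f"
  proof
    fix q assume q: "q \<in> Bs h"
    obtain x' y' \<phi>' where qq: "q = (x', y', \<phi>')" by (cases q) auto
    have qm: "(x', y', \<phi>') \<in> MSt" "x' \<in> dm h" "\<phi>' T = G x' h" using q unfolding qq mem_Bs by auto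
    have a': "y' \<in> T" "\<phi>' \<in> H x' y'" using qm mem_MS by auto
    obtain \<psi>' where e': "iv q = (y', x', \<psi>')" "\<psi>' \<in> H y' x'" "CS x' x' \<psi>' \<phi>' = ID x'"
      "CS y' y' \<phi>' \<psi>' = ID y'" using inv_ex qm(1) qq by blast
    have "y' \<in> dm f \<and> \<psi>' T = G y' f" using h(5) qm(2,3) a' e'(2,3,4) by blast
    moreover have "iv q \<in> MSt" using inv_MS q Bs_sub by blast
    ultimately show "iv q \<in> Bs f" unfolding e'(1) mem_Bs using e'(1) by simp
  qed
  moreover have "p \<in> Bs h" unfolding pp mem_Bs using pm h by simp
  ultimately show "\<exists>N. openin MTp N \<and> p \<in> N \<and> (\<forall>q\<in>N. iv q \<in> Bs f)"
    using Bs_open[OF h(1,2)] by blast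
qed

lemma tgt_lh: "local_homeomorphism_map MTp X tgt_star"
  unfolding local_homeomorphism_map_def
proof (intro conjI ballI)
  show "tgt_star ` topspace MTp \<subseteq> T" unfolding topspace_MT tgt_star_def mor_star_def by auto
next
  fix p assume "p \<in> topspace MTp"
  then have pm: "p \<in> MSt" using topspace_MT by simp
  have qm: "iv p \<in> MSt" using inv_MS[OF pm] .
  obtain f where f: "f \<in> Mor" "cd f = T" "iv p \<in> Bs f" by (rule rep_p[OF qm])
  define N0 where "N0 = Bs f"
  define N where "N = iv ` N0"
  have N0s: "N0 \<subseteq> MSt" unfolding N0_def by (rule Bs_sub)
  have Ns: "N \<subseteq> MSt" unfolding N_def using N0s inv_MS by auto
  have NN: "iv ` N = N0"
  proof -
    have "iv ` N = (\<lambda>r. iv (iv r)) ` N0" unfolding N_def image_image ..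
    also have "\<dots> = (\<lambda>r. r) ` N0" by (rule image_cong) (use inv_inv N0s in auto)
    finally show ?thesis by simp
  qed
  have Neq: "N = {r \<in> topspace MTp. iv r \<in> N0}"
  proof
    show "N \<subseteq> {r \<in> topspace MTp. iv r \<in> N0}"
    proof
      fix r assume r: "r \<in> N"
      have "iv r \<in> N0" using imageI[OF r, of iv] NN by simp
      then show "r \<in> {r \<in> topspace MTp. iv r \<in> N0}" using r Ns topspace_MT by auto
    qed
  next
    show "{r \<in> topspace MTp. iv r \<in> N0} \<subseteq> N"
    proof
      fix r assume "r \<in> {r \<in> topspace MTp. iv r \<in> N0}"
      then have r: "r \<in> MSt" "iv r \<in> N0" using topspace_MT by auto
      show "r \<in> N" unfolding N_def by (rule image_eqI[of r iv "iv r"]) (use r inv_inv in auto)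
    qed
  qed
  have oN0: "openin MTp N0" unfolding N0_def by (rule Bs_open[OF f(1,2)])
  have oN: "openin MTp N" unfolding Neq by (rule openin_continuous_map_preimage[OF inv_cont oN0])
  have pN: "p \<in> N" unfolding N_def
    by (rule image_eqI[of p iv "iv p"]) (use inv_inv[OF pm] f(3) N0_def in auto)
  have img: "tgt_star ` N = dm f"
  proof -
    have "tgt_star ` N = src_star ` (iv ` N)"
      unfolding image_image by (rule image_cong) (use tgt_inv Ns in auto)
    then show ?thesis using NN src_img[OF f(1,2)] N0_def by simp
  qed
  have tN: "topspace (subtopology MTp N) = N" using Ns topspace_MT by auto
  have tN0: "topspace (subtopology MTp N0) = N0" using N0s topspace_MT by auto
  have hm: "homeomorphic_maps (subtopology MTp N) (subtopology MTp N0) iv iv"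
    unfolding homeomorphic_maps_def
  proof (intro conjI)
    show "continuous_map (subtopology MTp N) (subtopology MTp N0) iv"
      unfolding continuous_map_in_subtopology using continuous_map_from_subtopology[OF inv_cont] tN NN
      by auto
    show "continuous_map (subtopology MTp N0) (subtopology MTp N) iv"
      unfolding continuous_map_in_subtopology using continuous_map_from_subtopology[OF inv_cont] tN0 N_def
      by auto
    show "\<forall>x\<in>topspace (subtopology MTp N). iv (iv x) = x" using tN Ns inv_inv by auto
    show "\<forall>y\<in>topspace (subtopology MTp N0). iv (iv y) = y" using tN0 N0s inv_inv by auto
  qed
  have h1: "homeomorphic_map (subtopology MTp N) (subtopology MTp N0) iv"
    using hm homeomorphic_maps_map by blast
  have h2: "homeomorphic_map (subtopology MTp N0) (subtopology X (dm f)) src_star"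
    unfolding N0_def by (rule src_homeo[OF f(1,2)])
  have "homeomorphic_map (subtopology MTp N) (subtopology X (dm f)) (src_star \<circ> iv)"
    by (rule homeomorphic_map_compose[OF h1 h2])
  then have "homeomorphic_map (subtopology MTp N) (subtopology X (tgt_star ` N)) tgt_star"
    unfolding img by (rule homeomorphic_map_eq) (use tN Ns tgt_inv in auto)
  then show "\<exists>N. openin MTp N \<and> p \<in> N \<and> openin X (tgt_star ` N) \<and>
         homeomorphic_map (subtopology MTp N) (subtopology X (tgt_star ` N)) tgt_star"
    using oN pN img mor_open(1)[OF f(1)] by (intro exI[of _ N]) simp
qed

lemma id_cont: "continuous_map X MTp (\<lambda>x. (x, x, ID x))"
proof (rule cont_into)
  fix x assume "x \<in> topspace X"
  then show "(x, x, ID x) \<in> MSt" unfolding mem_MS using id_hom by simp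
next
  fix x f assume x: "x \<in> topspace X" and f: "f \<in> Mor" "cd f = T" "(x, x, ID x) \<in> Bs f"
  have oT: "openin X T" by simp
  have b: "x \<in> dm f" "ID x T = G x f" using f(3) unfolding mem_Bs by auto
  have iT: "ident T \<in> Mor" "dm (ident T) = T" "cd (ident T) = T" using ident[OF oT] by auto
  have "G x (ident T) = G x f" using b ID_at[OF oT x] by simp
  then have "agr x (ident T) f" using germ_eq[OF iT(1) f(1)] iT f(2) x b(1) by simp
  then obtain A where A: "openin X A" "x \<in> A" "A \<subseteq> dm (ident T) \<inter> dm f"
    "\<forall>x'\<in>A. agr x' (ident T) f" by (rule agr_nbhd)
  have "\<forall>x'\<in>A. (x', x', ID x') \<in> Bs f"
  proof
    fix x' assume x': "x' \<in> A"
    have x'T: "x' \<in> T" "x' \<in> dm f" using A(3) x' iT by auto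
    have "G x' (ident T) = G x' f" using A(4) x' germ_eq[OF iT(1) f(1)] iT f(2) x'T by auto
    then show "(x', x', ID x') \<in> Bs f" unfolding mem_Bs mem_MS
      using x'T id_hom ID_at[OF oT x'T(1)] by simp
  qed
  then show "\<exists>N. openin X N \<and> x \<in> N \<and> (\<forall>q\<in>N. (q, q, ID q) \<in> Bs f)" using A(1,2) by blast
qed

abbreviation "DD \<equiv> {(q, p). q \<in> MSt \<and> p \<in> MSt \<and> src_star q = tgt_star p}"
abbreviation "cps \<equiv> compose_star X Mor dm cd cmp incl"

lemma cps_eq: "cps ((y, z, \<psi>), (x, y', \<phi>)) = (x, z, CS x z \<psi> \<phi>)"
  unfolding compose_star_def by simp

lemma comp_cont: "continuous_map (subtopology (prod_topology MTp MTp) DD) MTp cps"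
proof (rule cont_into)
  have tS: "topspace (subtopology (prod_topology MTp MTp) DD) = DD" using topspace_MT by auto
  {
    fix qp assume "qp \<in> topspace (subtopology (prod_topology MTp MTp) DD)"
    then have "qp \<in> DD" using tS by simp
    then obtain y z \<psi> x \<phi> where qp: "qp = ((y, z, \<psi>), (x, y, \<phi>))" "(y, z, \<psi>) \<in> MSt" "(x, y, \<phi>) \<in> MSt"
      unfolding src_star_def tgt_star_def by auto
    then show "cps qp \<in> MSt" unfolding qp cps_eq mem_MS using comp_hom by auto
  }
  fix qp k assume qpS: "qp \<in> topspace (subtopology (prod_topology MTp MTp) DD)"
    and k: "k \<in> Mor" "cd k = T" "cps qp \<in> Bs k"
  have "qp \<in> DD" using qpS tS by simp
  then obtain y z \<psi> x \<phi> where qp: "qp = ((y, z, \<psi>), (x, y, \<phi>))" "(y, z, \<psi>) \<in> MSt" "(x, y, \<phi>) \<in> MSt"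
    unfolding src_star_def tgt_star_def by auto
  have a: "x \<in> T" "y \<in> T" "z \<in> T" "\<phi> \<in> H x y" "\<psi> \<in> H y z" using qp mem_MS by auto
  have oT: "openin X T" by simp
  have kx: "x \<in> dm k" "CS x z \<psi> \<phi> T = G x k" using k(3) unfolding qp cps_eq mem_Bs by auto
  obtain g where g0: "g \<in> \<psi> T" by (rule hom_ex_mem[OF a(5) oT a(3)])
  have g: "g \<in> Mor" "cd g = T" "y \<in> dm g" "\<psi> T = G y g" using hom_mem[OF a(5) oT a(3) g0] by auto
  have og: "openin X (dm g)" using g(1) by (rule mor_open)
  have gT: "dm g \<subseteq> T" using g(1) by (rule dm_T)
  obtain f where f0: "f \<in> \<phi> (dm g)" by (rule hom_ex_mem[OF a(4) og g(3)])
  have f: "f \<in> Mor" "cd f = dm g" "x \<in> dm f" "\<phi> (dm g) = G x f" using hom_mem[OF a(4) og g(3) f0] by auto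
  have gf: "cmp g f \<in> Mor" "dm (cmp g f) = dm f" "cd (cmp g f) = T" using cmp_Mor[OF f(1) g(1) f(2)] g(2) by auto
  have "G x (cmp g f) = G x k" using COMP[OF a(4,5) oT a(3) g0 f0] kx by simp
  then have "agr x (cmp g f) k" using germ_eq[OF gf(1) k(1)] gf k(2) f(3) kx(1) by simp
  then obtain A where A: "openin X A" "x \<in> A" "A \<subseteq> dm (cmp g f) \<inter> dm k"
    "\<forall>x'\<in>A. agr x' (cmp g f) k" by (rule agr_nbhd)
  have ik: "incl (dm g) T \<in> Mor" "dm (incl (dm g) T) = dm g" "cd (incl (dm g) T) = T"
    using incl[OF og oT gT] by auto
  define kf where "kf = cmp (incl (dm g) T) f"
  have kf: "kf \<in> Mor" "dm kf = dm f" "cd kf = T" unfolding kf_def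
    using cmp_Mor[OF f(1) ik(1)] ik f(2) by auto
  have phT: "\<phi> T = G x kf" unfolding kf_def using hom_push[OF a(4) g(3) gT oT f] .
  have Akf: "A \<subseteq> dm kf" using A(3) kf gf by auto
  define h where "h = res kf A"
  have h: "h \<in> Mor" "cd h = T" "dm h = A" unfolding h_def using res[OF kf(1) A(1) Akf] kf by auto
  have Bh: "Bs h = Bs kf \<inter> {q. fst q \<in> A}" unfolding h_def by (rule Bs_res[OF kf(1) A(1) Akf])
  define N where "N = (Bs g \<times> Bs h) \<inter> DD"
  have oN: "openin (subtopology (prod_topology MTp MTp) DD) N"
    unfolding N_def openin_subtopology using Bs_open[OF g(1,2)] Bs_open[OF h(1,2)]
    by (intro exI[of _ "Bs g \<times> Bs h"]) (simp add: openin_prod_Times_iff)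
  have pin: "qp \<in> N" unfolding N_def qp(1) using qp mem_Bs g phT A(2) Bh kf f(3)
    unfolding src_star_def tgt_star_def by (auto simp: mem_Bs)
  have "\<forall>r\<in>N. cps r \<in> Bs k"
  proof
    fix r assume r: "r \<in> N"
    then have rD: "r \<in> DD" "fst r \<in> Bs g" "snd r \<in> Bs h" unfolding N_def by auto
    then obtain y1 z1 \<psi>1 x1 \<phi>1 where rr: "r = ((y1, z1, \<psi>1), (x1, y1, \<phi>1))"
      unfolding src_star_def tgt_star_def by auto
    have q0: "(y1, z1, \<psi>1) \<in> Bs g" using rD(2) rr by simp
    have q1: "(y1, z1, \<psi>1) \<in> MSt" "y1 \<in> dm g" "\<psi>1 T = G y1 g" using q0 unfolding mem_Bs by auto
    have p0: "(x1, y1, \<phi>1) \<in> Bs h" using rD(3) rr by simp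
    have p1: "(x1, y1, \<phi>1) \<in> Bs kf" "x1 \<in> A" using p0 Bh by auto
    have p1': "(x1, y1, \<phi>1) \<in> MSt" "\<phi>1 T = G x1 kf" using p1(1) unfolding mem_Bs by auto
    have b: "x1 \<in> T" "y1 \<in> T" "z1 \<in> T" "\<phi>1 \<in> H x1 y1" "\<psi>1 \<in> H y1 z1" using q1 p1' mem_MS by auto
    have x1f: "x1 \<in> dm f" using p1(2) A(3) gf by auto
    have rp: "y1 \<in> cd f \<and> \<phi>1 (cd f) = G x1 f"
      by (rule repr[OF f(1) x1f oT _ b(4) b(2)]) (use f(2) gT p1' kf_def in auto)
    have g1: "g \<in> \<psi>1 T" using q1(3) germ_self[OF g(1) q1(2)] by simp
    have f1: "f \<in> \<phi>1 (dm g)" using rp f(2) germ_self[OF f(1) x1f] by simp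
    have "CS x1 z1 \<psi>1 \<phi>1 T = G x1 (cmp g f)" by (rule COMP[OF b(4,5) oT b(3) g1 f1])
    also have "\<dots> = G x1 k"
    proof -
      have x1k: "x1 \<in> dm k" using p1(2) A(3) by auto
      have "agr x1 (cmp g f) k" using A(4) p1(2) by blast
      then show ?thesis using germ_eq[OF gf(1) k(1) _ _ x1k] gf(2,3) k(2) x1f by simp
    qed
    finally have c: "CS x1 z1 \<psi>1 \<phi>1 T = G x1 k" .
    have x1k: "x1 \<in> dm k" using p1(2) A(3) by auto
    show "cps r \<in> Bs k" unfolding rr cps_eq mem_Bs mem_MS using b comp_hom c x1k by simp
  qed
  then show "\<exists>N. openin (subtopology (prod_topology MTp MTp) DD) N \<and> qp \<in> N \<and> (\<forall>q\<in>N. cps q \<in> Bs k)"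
    using oN pin by blast
qed


end

theorem mainTheorem4:
  fixes X :: "'a topology"
    and Mor :: "'m set" and dm cd :: "'m \<Rightarrow> 'a set"
    and cmp :: "'m \<Rightarrow> 'm \<Rightarrow> 'm" and ident :: "'a set \<Rightarrow> 'm"
    and incl :: "'a set \<Rightarrow> 'a set \<Rightarrow> 'm"
  assumes "t1_space X"
    and "pre_pseudogroup X Mor dm cd cmp ident incl"
  shows "local_homeomorphism_map (mor_top X Mor dm cd cmp incl) X src_star
       \<and> local_homeomorphism_map (mor_top X Mor dm cd cmp incl) X tgt_star
       \<and> continuous_map X (mor_top X Mor dm cd cmp incl)
           (\<lambda>x. (x, x, id_star X Mor dm cd cmp ident incl x))
       \<and> continuous_map (mor_top X Mor dm cd cmp incl) (mor_top X Mor dm cd cmp incl)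
           (inv_star X Mor dm cd cmp ident incl)
       \<and> continuous_map
           (subtopology (prod_topology (mor_top X Mor dm cd cmp incl) (mor_top X Mor dm cd cmp incl))
              {(q, p). q \<in> mor_star X Mor dm cd cmp incl \<and> p \<in> mor_star X Mor dm cd cmp incl
                       \<and> src_star q = tgt_star p})
           (mor_top X Mor dm cd cmp incl)
           (compose_star X Mor dm cd cmp incl)"
proof -
  interpret PP X Mor dm cd cmp ident incl by (rule PP.intro) (rule assms(2))
  show ?thesis using src_lh tgt_lh id_cont inv_cont comp_cont by (intro conjI)
qed

end
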